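(* The topological conjugacy relation of minimal rotations on the $2$-torus is not amenable. That is, letting $X=\{(\alpha,\beta)\in(\mathbb{R}/\mathbb{Z})^2 : \alpha,\beta,1 \text{ are rationally independent}\}$ and $E$ the equivalence relation on $X$ given by $(\alpha,\beta)\,E\,(\alpha',\beta')$ iff the rotations $T_{\alpha,\beta}$ and $T_{\alpha',\beta'}$ are topologically conjugate, the countable Borel equivalence relation $E$ is not amenable.
   Context: For $(\alpha,\beta)\in(\mathbb{R}/\mathbb{Z})^2$, the rotation $T_{\alpha,\beta}$ of the torus $(\mathbb{R}/\mathbb{Z})^2$ is $T_{\alpha,\beta}(x,y)=(x+\alpha,y+\beta)$; it is minimal exactly when $\alpha,\beta,1$ are rationally independent. Two homeomorphisms $f,g$ of the torus are topologically conjugate if $h\circ f=g\circ h$ for some homeomorphism $h$ of the torus. A countable Borel equivalence relation $E$ on a standard Borel space $X$ is $\mu$-amenable, for a Borel probability measure $\mu$ on $X$, if there are Borel functions $\phi_n:E\to\mathbb{R}_{\ge 0}$ such that (1) for every $x\in X$, $\sum_{y E x}\phi_n(x,y)=1$, and (2) there is a Borel $E$-invariant set $A\subseteq X$ with $\mu(A)=1$ such that for all $(x,x')\in E\cap(A\times A)$, $\sum_{yEx}|\phi_n(x,y)-\phi_n(x',y)|\to 0$ as $n\to\infty$. $E$ is amenable if it is $\mu$-amenable for every Borel probability measure $\mu$ on $X$. *)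

theory Defs
  imports "HOL-Probability.Probability"
begin

text \<open>The torus (R/Z)^2 is realised as the product of two unit circles in the complex plane,
  via (x,y) |-> (exp(2 pi i x), exp(2 pi i y)).\<close>

definition torus2 :: "(complex \<times> complex) set" where
  "torus2 = sphere 0 1 \<times> sphere 0 1"

definition rot2 :: "real \<Rightarrow> real \<Rightarrow> complex \<times> complex \<Rightarrow> complex \<times> complex" where
  "rot2 \<alpha> \<beta> = (\<lambda>(z, w). (cis (2 * pi * \<alpha>) * z, cis (2 * pi * \<beta>) * w))"

definition top_conjugate_torus ::
  "(complex \<times> complex \<Rightarrow> complex \<times> complex) \<Rightarrow> (complex \<times> complex \<Rightarrow> complex \<times> complex) \<Rightarrow> bool" where
  "top_conjugate_torus f g \<longleftrightarrow>
     (\<exists>h k. homeomorphism torus2 torus2 h k \<and> (\<forall>p\<in>torus2. h (f p) = g (h p)))"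

definition rat_indep3 :: "real \<Rightarrow> real \<Rightarrow> real \<Rightarrow> bool" where
  "rat_indep3 a b c \<longleftrightarrow>
     (\<forall>p q r. p \<in> \<rat> \<and> q \<in> \<rat> \<and> r \<in> \<rat> \<and> p * a + q * b + r * c = 0 \<longrightarrow> p = 0 \<and> q = 0 \<and> r = 0)"

text \<open>Elements of R/Z are represented by their unique representative in [0,1).\<close>

definition minrot_params :: "(real \<times> real) set" where
  "minrot_params = {(\<alpha>, \<beta>). \<alpha> \<in> {0..<1} \<and> \<beta> \<in> {0..<1} \<and> rat_indep3 \<alpha> \<beta> 1}"

definition minrot_space :: "(real \<times> real) measure" where
  "minrot_space = restrict_space borel minrot_params"

definition minrot_conj :: "((real \<times> real) \<times> (real \<times> real)) set" where
  "minrot_conj = {((\<alpha>, \<beta>), (\<alpha>', \<beta>')). (\<alpha>, \<beta>) \<in> minrot_params \<and> (\<alpha>', \<beta>') \<in> minrot_params \<and>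
                    top_conjugate_torus (rot2 \<alpha> \<beta>) (rot2 \<alpha>' \<beta>')}"

definition mu_amenable :: "'a measure \<Rightarrow> ('a \<times> 'a) set \<Rightarrow> 'a measure \<Rightarrow> bool" where
  "mu_amenable Xs E \<mu> \<longleftrightarrow>
     (\<exists>\<phi> :: nat \<Rightarrow> 'a \<times> 'a \<Rightarrow> real.
        (\<forall>n. \<phi> n \<in> borel_measurable (restrict_space (Xs \<Otimes>\<^sub>M Xs) E)) \<and>
        (\<forall>n p. p \<in> E \<longrightarrow> 0 \<le> \<phi> n p) \<and>
        (\<forall>n. \<forall>x\<in>space Xs. ((\<lambda>y. \<phi> n (x, y)) has_sum 1) {y. (x, y) \<in> E}) \<and>
        (\<exists>A \<in> sets Xs. (\<forall>x y. (x, y) \<in> E \<longrightarrow> (x \<in> A \<longleftrightarrow> y \<in> A)) \<and>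
           emeasure \<mu> A = 1 \<and>
           (\<forall>x x'. (x, x') \<in> E \<and> x \<in> A \<and> x' \<in> A \<longrightarrow>
              (\<lambda>n. infsum (\<lambda>y. \<bar>\<phi> n (x, y) - \<phi> n (x', y)\<bar>) {y. (x, y) \<in> E}) \<longlonglongrightarrow> 0)))"

definition amenable_rel :: "'a measure \<Rightarrow> ('a \<times> 'a) set \<Rightarrow> bool" where
  "amenable_rel Xs E \<longleftrightarrow>
     (\<forall>\<mu>. sets \<mu> = sets Xs \<and> prob_space \<mu> \<longrightarrow> mu_amenable Xs E \<mu>)"

end

theory Submission
  imports Defs
begin

type_synonym imat = "int \<times> int \<times> int \<times> int"

definition act :: "imat \<Rightarrow> real \<times> real \<Rightarrow> real \<times> real" where
  "act M x = (case M of (a,b,c,d) \<Rightarrow>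
     (frac (of_int a * fst x + of_int b * snd x), frac (of_int c * fst x + of_int d * snd x)))"

definition mmul :: "imat \<Rightarrow> imat \<Rightarrow> imat" where
  "mmul M N = (case M of (a,b,c,d) \<Rightarrow> case N of (a',b',c',d') \<Rightarrow>
     (a*a' + b*c', a*b' + b*d', c*a' + d*c', c*b' + d*d'))"

definition idet :: "imat \<Rightarrow> int" where
  "idet M = (case M of (a,b,c,d) \<Rightarrow> a*d - b*c)"

definition GL :: "imat set" where
  "GL = {M. idet M = 1 \<or> idet M = -1}"

definition minv :: "imat \<Rightarrow> imat" where
  "minv M = (case M of (a,b,c,d) \<Rightarrow> (idet M * d, - idet M * b, - idet M * c, idet M * a))"

lemma frac_eq_if_diff_int: "x - y = of_int n \<Longrightarrow> frac x = frac y"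
proof -
  assume "x - y = of_int n"
  then have "x = y + of_int n" by simp
  then show ?thesis by (simp add: frac_add_of_int_right)
qed

lemma frac_eq_imp_diff_int: "frac x = frac y \<Longrightarrow> x - y = of_int (\<lfloor>x\<rfloor> - \<lfloor>y\<rfloor>)"
  by (simp add: frac_def)

lemma act_mmul: "act (mmul M N) x = act M (act N x)"
proof -
  obtain a b c d where M: "M = (a,b,c,d)" by (cases M) auto
  obtain a' b' c' d' where N: "N = (a',b',c',d')" by (cases N) auto
  obtain u v where x: "x = (u,v)" by (cases x) auto
  let ?p = "of_int a' * u + of_int b' * v" and ?q = "of_int c' * u + of_int d' * v"
  have 1: "frac (of_int (a*a' + b*c') * u + of_int (a*b' + b*d') * v)
      = frac (of_int a * frac ?p + of_int b * frac ?q)"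
    by (rule frac_eq_if_diff_int[of _ _ "a * \<lfloor>?p\<rfloor> + b * \<lfloor>?q\<rfloor>"])
       (simp add: frac_def algebra_simps)
  have 2: "frac (of_int (c*a' + d*c') * u + of_int (c*b' + d*d') * v)
      = frac (of_int c * frac ?p + of_int d * frac ?q)"
    by (rule frac_eq_if_diff_int[of _ _ "c * \<lfloor>?p\<rfloor> + d * \<lfloor>?q\<rfloor>"])
       (simp add: frac_def algebra_simps)
  have l: "act (mmul M N) x = (frac (of_int (a*a' + b*c') * u + of_int (a*b' + b*d') * v),
      frac (of_int (c*a' + d*c') * u + of_int (c*b' + d*d') * v))"
    by (simp only: act_def mmul_def M N x prod.case fst_conv snd_conv)
  have r: "act M (act N x) = (frac (of_int a * frac ?p + of_int b * frac ?q),
      frac (of_int c * frac ?p + of_int d * frac ?q))"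
    by (simp only: act_def mmul_def M N x prod.case fst_conv snd_conv)
  show ?thesis unfolding l r 1 2 ..
qed

lemma act_id: "x \<in> {0..<1} \<times> {0..<1} \<Longrightarrow> act (1,0,0,1) x = x"
  by (cases x) (auto simp: act_def frac_eq)

lemma idet_mmul: "idet (mmul M N) = idet M * idet N"
  by (cases M; cases N) (simp add: idet_def mmul_def algebra_simps)

lemma GL_mmul: "M \<in> GL \<Longrightarrow> N \<in> GL \<Longrightarrow> mmul M N \<in> GL"
  by (auto simp: GL_def idet_mmul)

lemma minv_right: "M \<in> GL \<Longrightarrow> mmul M (minv M) = (1,0,0,1)"
proof -
  assume "M \<in> GL"
  obtain a b c d where M: "M = (a,b,c,d)" by (cases M) auto
  have "idet M * idet M = 1" using \<open>M \<in> GL\<close> by (auto simp: GL_def)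
  then have e: "(a*d - b*c) * (a*d - b*c) = 1" by (simp add: idet_def M)
  show ?thesis using e by (simp add: mmul_def minv_def idet_def M algebra_simps)
qed

lemma minv_left: "M \<in> GL \<Longrightarrow> mmul (minv M) M = (1,0,0,1)"
proof -
  assume "M \<in> GL"
  obtain a b c d where M: "M = (a,b,c,d)" by (cases M) auto
  have "idet M * idet M = 1" using \<open>M \<in> GL\<close> by (auto simp: GL_def)
  then have e: "(a*d - b*c) * (a*d - b*c) = 1" by (simp add: idet_def M)
  show ?thesis using e by (simp add: mmul_def minv_def idet_def M algebra_simps)
qed

lemma GL_minv: "M \<in> GL \<Longrightarrow> minv M \<in> GL"
proof -
  assume "M \<in> GL"
  obtain a b c d where M: "M = (a,b,c,d)" by (cases M) auto
  have "idet M * idet M = 1" using \<open>M \<in> GL\<close> by (auto simp: GL_def)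
  then have e: "(a*d - b*c) * (a*d - b*c) = 1" by (simp add: idet_def M)
  have "idet (minv M) = (a*d - b*c) * (a*d - b*c) * (a*d - b*c)"
    by (simp add: minv_def idet_def M algebra_simps)
  then have "idet (minv M) = idet M" using e by (simp add: idet_def M)
  then show ?thesis using \<open>M \<in> GL\<close> by (simp add: GL_def)
qed

lemma mmul_assoc: "mmul (mmul A B) C = mmul A (mmul B C)"
  by (cases A; cases B; cases C) (simp add: mmul_def algebra_simps)

lemma mmul_id_left: "mmul (1,0,0,1) M = M" and mmul_id_right: "mmul M (1,0,0,1) = M"
  by (cases M; simp add: mmul_def)+

lemma rat_indep3_D:
  assumes "rat_indep3 a b 1" "p \<in> \<rat>" "q \<in> \<rat>" "r \<in> \<rat>" "p * a + q * b + r = 0"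
  shows "p = 0 \<and> q = 0 \<and> r = 0"
  using assms unfolding rat_indep3_def by (metis mult.right_neutral)

lemma params_indep: "x \<in> minrot_params \<Longrightarrow> rat_indep3 (fst x) (snd x) 1"
  by (auto simp: minrot_params_def)

lemma params_sq: "x \<in> minrot_params \<Longrightarrow> x \<in> {0..<1} \<times> {0..<1}"
  by (auto simp: minrot_params_def)

lemma act_inj:
  assumes x: "x \<in> minrot_params" and eq: "act M x = act N x"
  shows "M = N"
proof -
  obtain a b c d where M: "M = (a,b,c,d)" by (cases M) auto
  obtain a' b' c' d' where N: "N = (a',b',c',d')" by (cases N) auto
  obtain u v where xx: "x = (u,v)" by (cases x) auto
  have ind: "rat_indep3 u v 1" using params_indep[OF x] xx by simp
  have e1: "frac (of_int a * u + of_int b * v) = frac (of_int a' * u + of_int b' * v)"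
   and e2: "frac (of_int c * u + of_int d * v) = frac (of_int c' * u + of_int d' * v)"
    using eq by (simp_all add: act_def M N xx)
  from frac_eq_imp_diff_int[OF e1] obtain k where
    k0: "(of_int a * u + of_int b * v) - (of_int a' * u + of_int b' * v) = of_int k" by blast
  have k: "of_int (a - a') * u + of_int (b - b') * v + of_int (-k) = 0"
    using k0 by (simp add: algebra_simps)
  from frac_eq_imp_diff_int[OF e2] obtain k' where
    k0': "(of_int c * u + of_int d * v) - (of_int c' * u + of_int d' * v) = of_int k'" by blast
  have k': "of_int (c - c') * u + of_int (d - d') * v + of_int (-k') = 0"
    using k0' by (simp add: algebra_simps)
  have "of_int (a - a') = (0::real) \<and> of_int (b - b') = (0::real)"
    using rat_indep3_D[OF ind _ _ _ k] by (simp add: Rats_of_int del: of_int_diff)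
  moreover have "of_int (c - c') = (0::real) \<and> of_int (d - d') = (0::real)"
    using rat_indep3_D[OF ind _ _ _ k'] by (simp add: Rats_of_int del: of_int_diff)
  ultimately show ?thesis by (simp add: M N)
qed

lemma act_params:
  assumes x: "x \<in> minrot_params" and M: "M \<in> GL"
  shows "act M x \<in> minrot_params"
proof -
  obtain a b c d where MM: "M = (a,b,c,d)" by (cases M) auto
  obtain u v where xx: "x = (u,v)" by (cases x) auto
  have ind: "rat_indep3 u v 1" using params_indep[OF x] xx by simp
  have det: "a*d - b*c = 1 \<or> a*d - b*c = -1" using M by (simp add: GL_def idet_def MM)
  define y1 where "y1 = frac (of_int a * u + of_int b * v)"
  define y2 where "y2 = frac (of_int c * u + of_int d * v)"
  have "rat_indep3 y1 y2 1"
    unfolding rat_indep3_def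
  proof (intro allI impI)
    fix p q r :: real
    assume h: "p \<in> \<rat> \<and> q \<in> \<rat> \<and> r \<in> \<rat> \<and> p * y1 + q * y2 + r * 1 = 0"
    define n1 where "n1 = \<lfloor>of_int a * u + of_int b * v\<rfloor>"
    define n2 where "n2 = \<lfloor>of_int c * u + of_int d * v\<rfloor>"
    have y1e: "y1 = of_int a * u + of_int b * v - of_int n1" by (simp add: y1_def n1_def frac_def)
    have y2e: "y2 = of_int c * u + of_int d * v - of_int n2" by (simp add: y2_def n2_def frac_def)
    have "(p * of_int a + q * of_int c) * u + (p * of_int b + q * of_int d) * v
        + (r - p * of_int n1 - q * of_int n2) = p * y1 + q * y2 + r * 1"
      unfolding y1e y2e by (simp add: algebra_simps)
    then have "(p * of_int a + q * of_int c) * u + (p * of_int b + q * of_int d) * v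
        + (r - p * of_int n1 - q * of_int n2) = 0" using h by simp
    moreover have "p * of_int a + q * of_int c \<in> \<rat>" "p * of_int b + q * of_int d \<in> \<rat>"
        "r - p * of_int n1 - q * of_int n2 \<in> \<rat>"
      using h by (auto intro!: Rats_add Rats_mult Rats_diff simp: Rats_of_int)
    ultimately have z: "p * of_int a + q * of_int c = 0" "p * of_int b + q * of_int d = 0"
        "r - p * of_int n1 - q * of_int n2 = 0"
      using rat_indep3_D[OF ind] by blast+
    have "p * of_int (a*d - b*c) = of_int d * (p * of_int a + q * of_int c) - of_int c * (p * of_int b + q * of_int d)"
      by (simp add: algebra_simps)
    then have "p * of_int (a*d - b*c) = 0" using z by simp
    moreover
    have dz: "a*d - b*c \<noteq> 0" using det by auto
    then have dnz: "(of_int (a*d - b*c)::real) \<noteq> 0" by (simp only: of_int_eq_0_iff not_False_eq_True)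
    ultimately have p0: "p = 0" by (metis mult_eq_0_iff)
    have "q * of_int (a*d - b*c) = of_int a * (p * of_int b + q * of_int d) - of_int b * (p * of_int a + q * of_int c)"
      by (simp add: algebra_simps)
    then have "q * of_int (a*d - b*c) = 0" using z by simp
    then have q0: "q = 0" using dnz by (metis mult_eq_0_iff)
    show "p = 0 \<and> q = 0 \<and> r = 0" using p0 q0 z(3) by simp
  qed
  moreover have "y1 \<in> {0..<1}" "y2 \<in> {0..<1}" by (auto simp: y1_def y2_def frac_lt_1)
  ultimately show ?thesis
    by (simp add: minrot_params_def act_def MM xx y1_def y2_def)
qed

definition Hm :: "imat \<Rightarrow> complex \<times> complex \<Rightarrow> complex \<times> complex" where
  "Hm M p = (case M of (a,b,c,d) \<Rightarrow>
     (fst p powi a * snd p powi b, fst p powi c * snd p powi d))"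

lemma torus2_iff: "p \<in> torus2 \<longleftrightarrow> norm (fst p) = 1 \<and> norm (snd p) = 1"
  by (cases p) (auto simp: torus2_def)

lemma Hm_torus: "p \<in> torus2 \<Longrightarrow> Hm M p \<in> torus2"
  by (cases M) (auto simp: Hm_def torus2_iff norm_mult norm_power_int)

lemma Hm_cont: "continuous_on torus2 (Hm M)"
proof -
  obtain a b c d where M: "M = (a,b,c,d)" by (cases M) auto
  have nz1: "\<forall>p\<in>torus2. fst p \<noteq> 0" and nz2: "\<forall>p\<in>torus2. snd p \<noteq> 0"
    by (auto simp: torus2_iff)
  have "continuous_on torus2 (\<lambda>p. (fst p powi a * snd p powi b, fst p powi c * snd p powi d))"
    by (intro continuous_intros continuous_on_power_int) (use nz1 nz2 in auto)
  then show ?thesis by (simp add: Hm_def M)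
qed

lemma powi_pair_comp:
  fixes z w :: complex
  assumes "z \<noteq> 0" "w \<noteq> 0"
  shows "(z powi a * w powi b) powi a' * (z powi c * w powi d) powi b'
       = z powi (a*a' + c*b') * w powi (b*a' + d*b')"
  using assms
  by (simp add: power_int_mult_distrib power_int_mult[symmetric] power_int_add algebra_simps)

lemma Hm_comp:
  assumes "p \<in> torus2"
  shows "Hm N (Hm M p) = Hm (mmul N M) p"
proof -
  obtain a b c d where M: "M = (a,b,c,d)" by (cases M) auto
  obtain a' b' c' d' where N: "N = (a',b',c',d')" by (cases N) auto
  obtain z w where p: "p = (z,w)" by (cases p) auto
  have nz: "z \<noteq> 0" "w \<noteq> 0" using assms by (auto simp: p torus2_iff)
  show ?thesis
    using powi_pair_comp[OF nz, of a b a' c d b'] powi_pair_comp[OF nz, of a b c' c d d']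
    by (simp add: Hm_def M N p mmul_def algebra_simps)
qed

lemma Hm_id: "p \<in> torus2 \<Longrightarrow> Hm (1,0,0,1) p = p"
  by (cases p) (simp add: Hm_def)

lemma cis_frac: "cis (2 * pi * frac t) = cis (2 * pi * t)"
proof -
  have "cis (2 * pi * t) = cis (2 * pi * frac t) * cis (2 * pi * of_int \<lfloor>t\<rfloor>)"
    by (subst cis_mult) (simp add: frac_def algebra_simps)
  also have "cis (2 * pi * of_int \<lfloor>t\<rfloor>) = 1" by (rule cis_multiple_2pi) simp
  finally show ?thesis by simp
qed

lemma Hm_conj:
  assumes "p \<in> torus2"
  shows "Hm M (rot2 (fst x) (snd x) p) = rot2 (fst (act M x)) (snd (act M x)) (Hm M p)"
proof -
  obtain a b c d where M: "M = (a,b,c,d)" by (cases M) auto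
  obtain z w where p: "p = (z,w)" by (cases p) auto
  obtain u v where x: "x = (u,v)" by (cases x) auto
  have nz: "z \<noteq> 0" "w \<noteq> 0" using assms by (auto simp: p torus2_iff)
  have key: "((cis (2 * pi * u) * z) powi k) * ((cis (2 * pi * v) * w) powi l)
      = cis (2 * pi * frac (of_int k * u + of_int l * v)) * ((z powi k) * (w powi l))" for k l :: int
  proof -
    have "((cis (2 * pi * u) * z) powi k) * ((cis (2 * pi * v) * w) powi l)
        = (cis (of_int k * (2 * pi * u)) * cis (of_int l * (2 * pi * v))) * ((z powi k) * (w powi l))"
      by (simp add: power_int_mult_distrib cis_power_int algebra_simps)
    also have "cis (of_int k * (2 * pi * u)) * cis (of_int l * (2 * pi * v)) = cis (2 * pi * (of_int k * u + of_int l * v))"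
      by (simp add: cis_mult algebra_simps)
    finally show ?thesis by (simp add: cis_frac)
  qed
  show ?thesis
    by (simp add: Hm_def M p x rot2_def act_def key)
qed

lemma Hm_homeo:
  assumes "M \<in> GL"
  shows "homeomorphism torus2 torus2 (Hm M) (Hm (minv M))"
proof (rule homeomorphismI)
  show "continuous_on torus2 (Hm M)" "continuous_on torus2 (Hm (minv M))" by (rule Hm_cont)+
  show "Hm M ` torus2 \<subseteq> torus2" "Hm (minv M) ` torus2 \<subseteq> torus2" by (auto intro: Hm_torus)
  show "Hm (minv M) (Hm M x) = x" if "x \<in> torus2" for x
    using that by (simp add: Hm_comp minv_left[OF assms] Hm_id)
  show "Hm M (Hm (minv M) y) = y" if "y \<in> torus2" for y
    using that by (simp add: Hm_comp minv_right[OF assms] Hm_id)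
qed

lemma GL_conj:
  assumes x: "x \<in> minrot_params" and M: "M \<in> GL"
  shows "(x, act M x) \<in> minrot_conj"
proof -
  have "top_conjugate_torus (rot2 (fst x) (snd x)) (rot2 (fst (act M x)) (snd (act M x)))"
    unfolding top_conjugate_torus_def using Hm_homeo[OF M] Hm_conj by blast
  then show ?thesis using x act_params[OF x M]
    by (cases x; cases "act M x") (auto simp: minrot_conj_def)
qed

lemma int_valued_const:
  fixes D :: "real \<times> real \<Rightarrow> real"
  assumes cont: "continuous_on UNIV D" and int: "\<And>p. D p \<in> \<int>"
  shows "\<exists>k::int. \<forall>p. D p = of_int k"
proof -
  have "D constant_on UNIV"
  proof (rule continuous_discrete_range_constant[OF connected_UNIV cont])
    fix x :: "real \<times> real"
    show "\<exists>e>0. \<forall>y. y \<in> UNIV \<and> D y \<noteq> D x \<longrightarrow> e \<le> norm (D y - D x)"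
    proof (intro exI[of _ 1] conjI allI impI)
      fix y assume h: "y \<in> UNIV \<and> D y \<noteq> D x"
      obtain a where a: "D y = of_int a" using int by (meson Ints_cases)
      obtain b where b: "D x = of_int b" using int by (meson Ints_cases)
      have "a \<noteq> b" using h a b by auto
      then have "1 \<le> \<bar>a - b\<bar>" by linarith
      then show "1 \<le> norm (D y - D x)" using a b
        by (metis of_int_1_le_iff of_int_abs of_int_diff real_norm_def)
    qed simp
  qed
  then obtain c where c: "\<forall>p. D p = c" by (auto simp: constant_on_def)
  obtain k where "D 0 = of_int k" using int by (meson Ints_cases)
  then show ?thesis using c by auto
qed

lemma iexp_eq_imp:
  assumes "exp (\<i> * complex_of_real a) = exp (\<i> * complex_of_real b)"
  shows "(a - b) / (2 * pi) \<in> \<int>"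
proof -
  have "exp (\<i> * complex_of_real (a - b)) = exp (\<i> * complex_of_real a) / exp (\<i> * complex_of_real b)"
    by (simp add: exp_diff[symmetric] algebra_simps)
  also have "\<dots> = 1" using assms by simp
  finally obtain n :: int where "a - b = of_int (2 * n) * pi"
    by (auto simp: exp_eq_1)
  then have "(a - b) / (2 * pi) = of_int n" by simp
  then show ?thesis by simp
qed

lemma shift_lemma:
  fixes g :: "real \<times> real \<Rightarrow> real"
  assumes cont: "continuous_on UNIV g"
    and eq: "\<And>p. exp (\<i> * of_real (g (p + e))) = exp (\<i> * of_real c) * exp (\<i> * of_real (g p))"
  shows "\<exists>k::int. \<forall>p. g (p + e) - g p - c = 2 * pi * of_int k"
proof -
  define D where "D p = (g (p + e) - g p - c) / (2 * pi)" for p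
  have "continuous_on UNIV D" unfolding D_def
    by (intro continuous_intros continuous_on_compose2[OF cont]) auto
  moreover have "D p \<in> \<int>" for p
  proof -
    have "exp (\<i> * of_real (g (p + e))) = exp (\<i> * of_real (c + g p))"
      using eq[of p] by (simp add: exp_add[symmetric] algebra_simps)
    from iexp_eq_imp[OF this] show ?thesis by (simp add: D_def algebra_simps diff_divide_distrib)
  qed
  ultimately obtain k where "\<forall>p. D p = of_int k" using int_valued_const by blast
  then show ?thesis by (intro exI[of _ k]) (auto simp: D_def field_simps)
qed

lemma periodic_int:
  fixes h :: "real \<times> real \<Rightarrow> real"
  assumes per: "\<And>p. h (p + e) = h p"
  shows "h (p + of_int n *\<^sub>R e) = h p"
proof (induction n rule: int_induct[where k=0])
  case base then show ?case by simp
next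
  case (step1 i)
  have "h (p + of_int (i + 1) *\<^sub>R e) = h ((p + of_int i *\<^sub>R e) + e)"
    by (simp add: algebra_simps)
  also have "\<dots> = h p" using per step1 by simp
  finally show ?case .
next
  case (step2 i)
  have "h (p + of_int i *\<^sub>R e) = h ((p + of_int (i - 1) *\<^sub>R e) + e)"
    by (simp add: algebra_simps)
  then show ?case using per step2 by simp
qed

definition Emap :: "real \<times> real \<Rightarrow> complex \<times> complex" where
  "Emap p = (cis (2 * pi * fst p), cis (2 * pi * snd p))"

lemma Emap_torus: "Emap p \<in> torus2"
  by (simp add: Emap_def torus2_iff)

lemma Emap_cont: "continuous_on UNIV Emap"
  unfolding Emap_def cis_conv_exp by (intro continuous_intros)

lemma lift_rot:
  fixes f :: "complex \<times> complex \<Rightarrow> complex"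
  assumes cont: "continuous_on torus2 f"
    and img: "\<And>p. p \<in> torus2 \<Longrightarrow> norm (f p) = 1"
    and eq: "\<And>p. p \<in> torus2 \<Longrightarrow> f (rot2 \<alpha> \<beta> p) = cis (2 * pi * \<gamma>) * f p"
  shows "\<exists>m1 m2 k :: int. \<gamma> = of_int m1 * \<alpha> + of_int m2 * \<beta> + of_int k"
proof -
  define F where "F = f \<circ> Emap"
  have contF: "continuous_on UNIV F" unfolding F_def
    by (rule continuous_on_compose[OF Emap_cont]) (rule continuous_on_subset[OF cont], auto simp: Emap_torus)
  have imgF: "F \<in> UNIV \<rightarrow> sphere 0 1" using img Emap_torus by (auto simp: F_def)
  obtain g0 where contg0: "continuous_on UNIV (complex_of_real \<circ> g0)"
    and Fg: "\<forall>x\<in>UNIV. F x = exp (\<i> * of_real (g0 x))"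
    using Borsukian_UNIV[unfolded Borsukian_continuous_logarithm_circle_real] contF imgF by blast
  have contg: "continuous_on UNIV g0"
  proof -
    have "continuous_on UNIV (Re \<circ> (complex_of_real \<circ> g0))"
      by (rule continuous_on_compose[OF contg0]) (intro continuous_intros)
    then show ?thesis by (simp add: o_def)
  qed
  have Fshift1: "F (p + (1, 0)) = F p" for p
    by (simp add: F_def Emap_def distrib_left cis_mult[symmetric] cis_multiple_2pi)
  have Fshift2: "F (p + (0, 1)) = F p" for p
    by (simp add: F_def Emap_def distrib_left cis_mult[symmetric] cis_multiple_2pi)
  have Fshift3: "F (p + (\<alpha>, \<beta>)) = cis (2 * pi * \<gamma>) * F p" for p
  proof -
    have "Emap (p + (\<alpha>, \<beta>)) = rot2 \<alpha> \<beta> (Emap p)"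
      by (simp add: Emap_def rot2_def distrib_left cis_mult[symmetric] algebra_simps)
    then show ?thesis using eq[OF Emap_torus] by (simp add: F_def)
  qed
  obtain m1 :: int where m1: "\<forall>p. g0 (p + (1,0)) - g0 p - 0 = 2 * pi * of_int m1"
    using shift_lemma[OF contg, of "(1,0)" 0] Fshift1 Fg by auto
  obtain m2 :: int where m2: "\<forall>p. g0 (p + (0,1)) - g0 p - 0 = 2 * pi * of_int m2"
    using shift_lemma[OF contg, of "(0,1)" 0] Fshift2 Fg by auto
  obtain k :: int where k: "\<forall>p. g0 (p + (\<alpha>,\<beta>)) - g0 p - 2 * pi * \<gamma> = 2 * pi * of_int k"
  proof -
    have "exp (\<i> * of_real (g0 (p + (\<alpha>,\<beta>)))) = exp (\<i> * of_real (2 * pi * \<gamma>)) * exp (\<i> * of_real (g0 p))" for p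
      using Fshift3[of p] Fg by (simp add: cis_conv_exp)
    then show ?thesis using shift_lemma[OF contg, of "(\<alpha>,\<beta>)" "2 * pi * \<gamma>"] that by blast
  qed
  define h where "h p = g0 p - 2 * pi * (of_int m1 * fst p + of_int m2 * snd p)" for p
  have conth: "continuous_on UNIV h" unfolding h_def
    by (intro continuous_intros contg)
  have per1: "h (p + (1,0)) = h p" for p using m1 by (cases p) (simp add: h_def algebra_simps)
  have per2: "h (p + (0,1)) = h p" for p using m2 by (cases p) (simp add: h_def algebra_simps)
  have hfrac: "h p = h (frac (fst p), frac (snd p))" for p
  proof -
    obtain s t where p: "p = (s,t)" by (cases p) auto
    have e1: "h ((frac s, frac t) + of_int \<lfloor>s\<rfloor> *\<^sub>R (1,0)) = h (frac s, frac t)"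
      by (rule periodic_int[of h "(1,0)", OF per1])
    have e2: "h ((s, frac t) + of_int \<lfloor>t\<rfloor> *\<^sub>R (0,1)) = h (s, frac t)"
      by (rule periodic_int[of h "(0,1)", OF per2])
    have q1: "(frac s, frac t) + of_int \<lfloor>s\<rfloor> *\<^sub>R (1,0) = (s, frac t)" by (simp add: frac_def)
    have q2: "(s, frac t) + of_int \<lfloor>t\<rfloor> *\<^sub>R (0,1) = (s, t)" by (simp add: frac_def)
    show ?thesis using e1 e2 unfolding q1 q2 p by simp
  qed
  have "compact (h ` cbox (0,0) (1,1))"
    by (rule compact_continuous_image[OF continuous_on_subset[OF conth]]) auto
  then obtain B where B: "\<forall>y \<in> h ` cbox (0,0) (1,1). norm y \<le> B"
    using compact_imp_bounded bounded_iff by metis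
  have hB: "\<bar>h p\<bar> \<le> B" for p
  proof -
    have "(frac (fst p), frac (snd p)) \<in> cbox (0,0) (1,1)"
      by (auto simp: cbox_def Basis_prod_def inner_prod_def frac_lt_1 less_imp_le)
    then show ?thesis using B hfrac[of p] by force
  qed
  define C where "C = 2 * pi * (\<gamma> + of_int k - of_int m1 * \<alpha> - of_int m2 * \<beta>)"
  have incr: "h (p + (\<alpha>,\<beta>)) = h p + C" for p
    using k by (cases p) (simp add: h_def C_def algebra_simps)
  have hn: "h (of_nat n *\<^sub>R (\<alpha>,\<beta>)) = h 0 + of_nat n * C" for n
  proof (induction n)
    case 0 then show ?case by (simp add: zero_prod_def)
  next
    case (Suc n)
    have "h (of_nat (Suc n) *\<^sub>R (\<alpha>,\<beta>)) = h (of_nat n *\<^sub>R (\<alpha>,\<beta>) + (\<alpha>,\<beta>))"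
      by (simp add: algebra_simps)
    also have "\<dots> = h 0 + of_nat (Suc n) * C" using incr[of "of_nat n *\<^sub>R (\<alpha>,\<beta>)"] Suc by (simp add: algebra_simps)
    finally show ?case .
  qed
  have C0: "C = 0"
  proof (rule ccontr)
    assume "C \<noteq> 0"
    obtain n :: nat where n: "2 * B / \<bar>C\<bar> < of_nat n" using reals_Archimedean2 by blast
    have "\<bar>of_nat n * C\<bar> \<le> 2 * B"
      using hB[of "of_nat n *\<^sub>R (\<alpha>,\<beta>)"] hB[of 0] hn[of n] by linarith
    moreover have "2 * B < of_nat n * \<bar>C\<bar>" using n \<open>C \<noteq> 0\<close> by (simp add: field_simps)
    ultimately show False by (simp add: abs_mult)
  qed
  have "\<gamma> + of_int k - of_int m1 * \<alpha> - of_int m2 * \<beta> = 0" using C0 by (simp add: C_def)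
  then have "\<gamma> = of_int m1 * \<alpha> + of_int m2 * \<beta> + of_int (-k)" by simp
  then show ?thesis by blast
qed

lemma rot2_simp: "rot2 a b q = (cis (2 * pi * a) * fst q, cis (2 * pi * b) * snd q)"
  by (cases q) (simp add: rot2_def)

lemma rot2_torus: "q \<in> torus2 \<Longrightarrow> rot2 a b q \<in> torus2"
  by (simp add: rot2_simp torus2_iff norm_mult)

lemma minrot_conj_iff:
  "(x, y) \<in> minrot_conj \<longleftrightarrow> x \<in> minrot_params \<and> y \<in> minrot_params \<and>
     top_conjugate_torus (rot2 (fst x) (snd x)) (rot2 (fst y) (snd y))"
  by (cases x; cases y) (simp add: minrot_conj_def)

lemma frac_of_lift:
  assumes "g = of_int m1 * a + of_int m2 * b + of_int k" "g \<in> {0..<1}"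
  shows "g = frac (of_int m1 * a + of_int m2 * b)"
proof -
  have "frac (of_int m1 * a + of_int m2 * b) = frac g"
    by (rule frac_eq_if_diff_int[of _ _ "-k"]) (simp add: assms(1))
  also have "frac g = g" using assms(2) by (simp add: frac_eq)
  finally show ?thesis by simp
qed

lemma conj_act:
  assumes "(x, y) \<in> minrot_conj"
  shows "\<exists>M. y = act M x"
proof -
  have x: "x \<in> minrot_params" and y: "y \<in> minrot_params"
    and tc: "top_conjugate_torus (rot2 (fst x) (snd x)) (rot2 (fst y) (snd y))"
    using assms by (auto simp: minrot_conj_iff)
  obtain H K where hom: "homeomorphism torus2 torus2 H K"
    and cj: "\<forall>p\<in>torus2. H (rot2 (fst x) (snd x) p) = rot2 (fst y) (snd y) (H p)"
    using tc by (auto simp: top_conjugate_torus_def)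
  have contH: "continuous_on torus2 H" using hom by (simp add: homeomorphism_def)
  have HT: "\<And>p. p \<in> torus2 \<Longrightarrow> H p \<in> torus2"
    using hom homeomorphism_image1 by blast
  have "\<exists>m1 m2 k :: int. fst y = of_int m1 * fst x + of_int m2 * snd x + of_int k"
  proof (rule lift_rot[of "fst \<circ> H"])
    show "continuous_on torus2 (fst \<circ> H)"
      by (rule continuous_on_compose[OF contH]) (intro continuous_intros)
    show "norm ((fst \<circ> H) p) = 1" if "p \<in> torus2" for p using HT[OF that] by (simp add: torus2_iff)
    show "(fst \<circ> H) (rot2 (fst x) (snd x) p) = cis (2 * pi * fst y) * (fst \<circ> H) p" if "p \<in> torus2" for p
      using cj that by (simp add: rot2_simp)
  qed
  then obtain a b k1 :: int where 1: "fst y = of_int a * fst x + of_int b * snd x + of_int k1" by blast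
  have "\<exists>m1 m2 k :: int. snd y = of_int m1 * fst x + of_int m2 * snd x + of_int k"
  proof (rule lift_rot[of "snd \<circ> H"])
    show "continuous_on torus2 (snd \<circ> H)"
      by (rule continuous_on_compose[OF contH]) (intro continuous_intros)
    show "norm ((snd \<circ> H) p) = 1" if "p \<in> torus2" for p using HT[OF that] by (simp add: torus2_iff)
    show "(snd \<circ> H) (rot2 (fst x) (snd x) p) = cis (2 * pi * snd y) * (snd \<circ> H) p" if "p \<in> torus2" for p
      using cj that by (simp add: rot2_simp)
  qed
  then obtain c d k2 :: int where 2: "snd y = of_int c * fst x + of_int d * snd x + of_int k2" by blast
  have ysq: "fst y \<in> {0..<1}" "snd y \<in> {0..<1}" using params_sq[OF y] by auto
  have "act (a,b,c,d) x = (frac (of_int a * fst x + of_int b * snd x), frac (of_int c * fst x + of_int d * snd x))"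
    by (simp add: act_def)
  then have "y = act (a,b,c,d) x"
    using frac_of_lift[OF 1 ysq(1)] frac_of_lift[OF 2 ysq(2)]
    by (metis prod.collapse)
  then show ?thesis by blast
qed

lemma conj_sym:
  assumes "(x, y) \<in> minrot_conj"
  shows "(y, x) \<in> minrot_conj"
proof -
  have x: "x \<in> minrot_params" and y: "y \<in> minrot_params"
    and tc: "top_conjugate_torus (rot2 (fst x) (snd x)) (rot2 (fst y) (snd y))"
    using assms by (auto simp: minrot_conj_iff)
  obtain H K where hom: "homeomorphism torus2 torus2 H K"
    and cj: "\<forall>p\<in>torus2. H (rot2 (fst x) (snd x) p) = rot2 (fst y) (snd y) (H p)"
    using tc by (auto simp: top_conjugate_torus_def)
  have hom': "homeomorphism torus2 torus2 K H" using hom homeomorphism_sym by metis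
  have "K (rot2 (fst y) (snd y) q) = rot2 (fst x) (snd x) (K q)" if q: "q \<in> torus2" for q
  proof -
    have Kq: "K q \<in> torus2" using hom q homeomorphism_image2 by blast
    have HKq: "H (K q) = q" using homeomorphism_apply2[OF hom q] .
    have "H (rot2 (fst x) (snd x) (K q)) = rot2 (fst y) (snd y) (H (K q))" using cj Kq by blast
    then have "H (rot2 (fst x) (snd x) (K q)) = rot2 (fst y) (snd y) q" using HKq by simp
    then have "K (H (rot2 (fst x) (snd x) (K q))) = K (rot2 (fst y) (snd y) q)" by simp
    moreover have "K (H (rot2 (fst x) (snd x) (K q))) = rot2 (fst x) (snd x) (K q)"
      using homeomorphism_apply1[OF hom rot2_torus[OF Kq]] .
    ultimately show ?thesis by simp
  qed
  then have "top_conjugate_torus (rot2 (fst y) (snd y)) (rot2 (fst x) (snd x))"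
    unfolding top_conjugate_torus_def using hom' by blast
  then show ?thesis using x y by (simp add: minrot_conj_iff)
qed

lemma conj_GL:
  assumes "(x, y) \<in> minrot_conj"
  shows "\<exists>M\<in>GL. y = act M x"
proof -
  have x: "x \<in> minrot_params" using assms by (simp add: minrot_conj_iff)
  obtain M where M: "y = act M x" using conj_act[OF assms] by blast
  obtain N where N: "x = act N y" using conj_act[OF conj_sym[OF assms]] by blast
  have "act (mmul N M) x = act (1,0,0,1) x"
    using M N act_id[OF params_sq[OF x]] by (simp add: act_mmul)
  then have "mmul N M = (1,0,0,1)" by (rule act_inj[OF x])
  then have "idet (mmul N M) = 1" by (simp add: idet_def)
  then have "idet N * idet M = 1" by (simp add: idet_mmul)
  then have "idet M = 1 \<or> idet M = -1" by (simp add: zmult_eq_1_iff) blast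
  then have "M \<in> GL" by (simp add: GL_def)
  then show ?thesis using M by blast
qed

lemma class_eq:
  assumes x: "x \<in> minrot_params"
  shows "{y. (x, y) \<in> minrot_conj} = (\<lambda>M. act M x) ` GL"
  using conj_GL GL_conj[OF x] by blast

lemma act_inj_on: "x \<in> minrot_params \<Longrightarrow> inj_on (\<lambda>M. act M x) A"
  by (auto intro: inj_onI act_inj)

definition Sq :: "(real \<times> real) set" where "Sq = {0..<1} \<times> {0..<1}"

lemma frac_measurable[measurable]: "frac \<in> borel_measurable (borel :: real measure)"
  unfolding frac_def[abs_def] by measurable

lemma Sq_sets_pair[measurable]: "Sq \<in> sets (borel \<Otimes>\<^sub>M borel)"
  unfolding Sq_def by (intro pair_measureI) auto

lemma Sq_sets[measurable]: "Sq \<in> sets borel"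
  by (metis Sq_sets_pair borel_prod)

lemma sets_lborel_pair: "sets (lborel \<Otimes>\<^sub>M lborel) = sets (borel \<Otimes>\<^sub>M (borel :: real measure))"
  by (rule sets_pair_measure_cong) simp_all

lemma rot_inv_1d:
  fixes G :: "real \<Rightarrow> ennreal"
  assumes G[measurable]: "G \<in> borel_measurable borel"
  shows "(\<integral>\<^sup>+ a. indicator {0..<1} a * G (frac (a + c)) \<partial>lborel) = (\<integral>\<^sup>+ a. indicator {0..<1} a * G a \<partial>lborel)"
proof -
  define d where "d = frac c"
  have d: "0 \<le> d" "d < 1" by (auto simp: d_def frac_lt_1)
  have fr: "frac (a + c) = frac (a + d)" for a
  proof -
    have "a + c = (a + d) + of_int \<lfloor>c\<rfloor>" by (simp add: d_def frac_def)
    then have "frac (a + c) = frac ((a + d) + of_int \<lfloor>c\<rfloor>)" by (rule arg_cong)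
    also have "\<dots> = frac (a + d)" by (rule frac_add_of_int_right)
    finally show ?thesis .
  qed
  have pt: "indicator {0..<1} a * G (frac (a + c))
      = indicator {0..<1-d} a * G (a + d) + indicator {1-d..<1} a * G (a + d - 1)" for a
  proof (cases "0 \<le> a \<and> a < 1")
    case True
    show ?thesis
    proof (cases "a < 1 - d")
      case True
      then have "frac (a + d) = a + d" using \<open>0 \<le> a \<and> a < 1\<close> d by (simp add: frac_eq)
      then show ?thesis using True \<open>0 \<le> a \<and> a < 1\<close> by (simp add: fr indicator_def)
    next
      case False
      then have "frac (a + d - 1) = a + d - 1" using \<open>0 \<le> a \<and> a < 1\<close> d by (simp add: frac_eq)
      moreover have "frac (a + d - 1) = frac (a + d)"
        using frac_add_of_int_right[of "a + d - 1" 1] by simp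
      ultimately show ?thesis using False \<open>0 \<le> a \<and> a < 1\<close> by (simp add: fr indicator_def)
    qed
  next
    case False
    then show ?thesis using d by (auto simp: indicator_def)
  qed
  have i1: "(\<integral>\<^sup>+ a. indicator {0..<1-d} a * G (a + d) \<partial>lborel) = (\<integral>\<^sup>+ u. indicator {d..<1} u * G u \<partial>lborel)"
  proof -
    have "(\<integral>\<^sup>+ u. indicator {d..<1} u * G u \<partial>lborel)
        = ennreal \<bar>1\<bar> * (\<integral>\<^sup>+ a. indicator {d..<1} (d + 1 * a) * G (d + 1 * a) \<partial>lborel)"
      by (rule nn_integral_real_affine) auto
    also have "\<dots> = (\<integral>\<^sup>+ a. indicator {d..<1} (d + 1 * a) * G (d + 1 * a) \<partial>lborel)" by simp
    also have "\<dots> = (\<integral>\<^sup>+ a. indicator {0..<1-d} a * G (a + d) \<partial>lborel)"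
      by (intro nn_integral_cong) (auto simp: indicator_def add.commute)
    finally show ?thesis by simp
  qed
  have i2: "(\<integral>\<^sup>+ a. indicator {1-d..<1} a * G (a + d - 1) \<partial>lborel) = (\<integral>\<^sup>+ u. indicator {0..<d} u * G u \<partial>lborel)"
  proof -
    have "(\<integral>\<^sup>+ u. indicator {0..<d} u * G u \<partial>lborel)
        = ennreal \<bar>1\<bar> * (\<integral>\<^sup>+ a. indicator {0..<d} ((d - 1) + 1 * a) * G ((d - 1) + 1 * a) \<partial>lborel)"
      by (rule nn_integral_real_affine) auto
    also have "\<dots> = (\<integral>\<^sup>+ a. indicator {0..<d} ((d - 1) + 1 * a) * G ((d - 1) + 1 * a) \<partial>lborel)" by simp
    also have "\<dots> = (\<integral>\<^sup>+ a. indicator {1-d..<1} a * G (a + d - 1) \<partial>lborel)"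
      by (intro nn_integral_cong) (auto simp: indicator_def algebra_simps)
    finally show ?thesis by simp
  qed
  have "(\<integral>\<^sup>+ a. indicator {0..<1} a * G (frac (a + c)) \<partial>lborel)
      = (\<integral>\<^sup>+ a. indicator {0..<1-d} a * G (a + d) + indicator {1-d..<1} a * G (a + d - 1) \<partial>lborel)"
    by (simp add: pt)
  also have "\<dots> = (\<integral>\<^sup>+ a. indicator {0..<1-d} a * G (a + d) \<partial>lborel) + (\<integral>\<^sup>+ a. indicator {1-d..<1} a * G (a + d - 1) \<partial>lborel)"
    by (rule nn_integral_add) auto
  also have "\<dots> = (\<integral>\<^sup>+ u. indicator {d..<1} u * G u \<partial>lborel) + (\<integral>\<^sup>+ u. indicator {0..<d} u * G u \<partial>lborel)"
    by (simp add: i1 i2)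
  also have "\<dots> = (\<integral>\<^sup>+ u. indicator {d..<1} u * G u + indicator {0..<d} u * G u \<partial>lborel)"
    by (rule nn_integral_add[symmetric]) auto
  also have "\<dots> = (\<integral>\<^sup>+ u. indicator {0..<1} u * G u \<partial>lborel)"
    using d by (intro nn_integral_cong) (auto simp: indicator_def)
  finally show ?thesis .
qed

lemma indicator_Sq: "indicator Sq (a, b) = (indicator {0..<1} a * indicator {0..<1} b :: ennreal)"
  by (auto simp: Sq_def indicator_def)

lemma shear1_inv:
  fixes f :: "real \<times> real \<Rightarrow> ennreal"
  assumes f[measurable]: "f \<in> borel_measurable borel"
  shows "(\<integral>\<^sup>+ x. indicator Sq x * f (frac (fst x + c * snd x), snd x) \<partial>lborel)
       = (\<integral>\<^sup>+ x. indicator Sq x * f x \<partial>lborel)"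
proof -
  have fb[measurable]: "f \<in> borel_measurable (borel \<Otimes>\<^sub>M borel)" using f by (simp add: borel_prod)
  have "(\<lambda>x. indicator Sq x * f (frac (fst x + c * snd x), snd x)) \<in> borel_measurable (borel \<Otimes>\<^sub>M borel)"
    by measurable
  then have m1: "(\<lambda>x. indicator Sq x * f (frac (fst x + c * snd x), snd x)) \<in> borel_measurable (lborel \<Otimes>\<^sub>M lborel)"
    by (subst measurable_cong_sets[OF sets_lborel_pair refl])
  have "(\<lambda>x. indicator Sq x * f x) \<in> borel_measurable (borel \<Otimes>\<^sub>M borel)"
    by measurable
  then have m2: "(\<lambda>x. indicator Sq x * f x) \<in> borel_measurable (lborel \<Otimes>\<^sub>M lborel)"
    by (subst measurable_cong_sets[OF sets_lborel_pair refl])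
  have "(\<integral>\<^sup>+ x. indicator Sq x * f (frac (fst x + c * snd x), snd x) \<partial>lborel)
      = (\<integral>\<^sup>+ x. indicator Sq x * f (frac (fst x + c * snd x), snd x) \<partial>(lborel \<Otimes>\<^sub>M lborel))"
    by (simp add: lborel_prod)
  also have "\<dots> = (\<integral>\<^sup>+ b. \<integral>\<^sup>+ a. indicator Sq (a, b) * f (frac (a + c * b), b) \<partial>lborel \<partial>lborel)"
    using lborel_pair.nn_integral_snd[OF m1] by simp
  also have "\<dots> = (\<integral>\<^sup>+ b. indicator {0..<1} b * \<integral>\<^sup>+ a. indicator {0..<1} a * f (frac (a + c * b), b) \<partial>lborel \<partial>lborel)"
    by (intro nn_integral_cong) (simp add: indicator_Sq nn_integral_cmult[symmetric] mult.assoc mult.left_commute)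
  also have "\<dots> = (\<integral>\<^sup>+ b. indicator {0..<1} b * \<integral>\<^sup>+ a. indicator {0..<1} a * f (a, b) \<partial>lborel \<partial>lborel)"
    by (intro nn_integral_cong arg_cong2[where f="(*)"] refl rot_inv_1d[where G="\<lambda>a. f (a, _)"]) measurable
  also have "\<dots> = (\<integral>\<^sup>+ b. \<integral>\<^sup>+ a. indicator Sq (a, b) * f (a, b) \<partial>lborel \<partial>lborel)"
    by (intro nn_integral_cong) (simp add: indicator_Sq nn_integral_cmult[symmetric] mult.assoc mult.left_commute)
  also have "\<dots> = (\<integral>\<^sup>+ x. indicator Sq x * f x \<partial>(lborel \<Otimes>\<^sub>M lborel))"
    using lborel_pair.nn_integral_snd[OF m2] by simp
  also have "\<dots> = (\<integral>\<^sup>+ x. indicator Sq x * f x \<partial>lborel)"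
    by (simp add: lborel_prod)
  finally show ?thesis .
qed

lemma shear2_inv:
  fixes f :: "real \<times> real \<Rightarrow> ennreal"
  assumes f[measurable]: "f \<in> borel_measurable borel"
  shows "(\<integral>\<^sup>+ x. indicator Sq x * f (fst x, frac (snd x + c * fst x)) \<partial>lborel)
       = (\<integral>\<^sup>+ x. indicator Sq x * f x \<partial>lborel)"
proof -
  have fb[measurable]: "f \<in> borel_measurable (borel \<Otimes>\<^sub>M borel)" using f by (simp add: borel_prod)
  have "(\<lambda>x. indicator Sq x * f (fst x, frac (snd x + c * fst x))) \<in> borel_measurable (borel \<Otimes>\<^sub>M borel)"
    by measurable
  then have m1: "(\<lambda>x. indicator Sq x * f (fst x, frac (snd x + c * fst x))) \<in> borel_measurable (lborel \<Otimes>\<^sub>M lborel)"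
    by (subst measurable_cong_sets[OF sets_lborel_pair refl])
  have "(\<lambda>x. indicator Sq x * f x) \<in> borel_measurable (borel \<Otimes>\<^sub>M borel)"
    by measurable
  then have m2: "(\<lambda>x. indicator Sq x * f x) \<in> borel_measurable (lborel \<Otimes>\<^sub>M lborel)"
    by (subst measurable_cong_sets[OF sets_lborel_pair refl])
  have "(\<integral>\<^sup>+ x. indicator Sq x * f (fst x, frac (snd x + c * fst x)) \<partial>lborel)
      = (\<integral>\<^sup>+ x. indicator Sq x * f (fst x, frac (snd x + c * fst x)) \<partial>(lborel \<Otimes>\<^sub>M lborel))"
    by (simp add: lborel_prod)
  also have "\<dots> = (\<integral>\<^sup>+ a. \<integral>\<^sup>+ b. indicator Sq (a, b) * f (a, frac (b + c * a)) \<partial>lborel \<partial>lborel)"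
    using lborel.nn_integral_fst[OF m1] by simp
  also have "\<dots> = (\<integral>\<^sup>+ a. indicator {0..<1} a * \<integral>\<^sup>+ b. indicator {0..<1} b * f (a, frac (b + c * a)) \<partial>lborel \<partial>lborel)"
    by (intro nn_integral_cong) (simp add: indicator_Sq nn_integral_cmult[symmetric] mult.assoc mult.left_commute)
  also have "\<dots> = (\<integral>\<^sup>+ a. indicator {0..<1} a * \<integral>\<^sup>+ b. indicator {0..<1} b * f (a, b) \<partial>lborel \<partial>lborel)"
    by (intro nn_integral_cong arg_cong2[where f="(*)"] refl rot_inv_1d[where G="\<lambda>b. f (_, b)"]) measurable
  also have "\<dots> = (\<integral>\<^sup>+ a. \<integral>\<^sup>+ b. indicator Sq (a, b) * f (a, b) \<partial>lborel \<partial>lborel)"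
    by (intro nn_integral_cong) (simp add: indicator_Sq nn_integral_cmult[symmetric] mult.assoc mult.left_commute)
  also have "\<dots> = (\<integral>\<^sup>+ x. indicator Sq x * f x \<partial>(lborel \<Otimes>\<^sub>M lborel))"
    using lborel.nn_integral_fst[OF m2] by simp
  also have "\<dots> = (\<integral>\<^sup>+ x. indicator Sq x * f x \<partial>lborel)"
    by (simp add: lborel_prod)
  finally show ?thesis .
qed

definition Lset :: "rat \<times> rat \<times> rat \<Rightarrow> (real \<times> real) set" where
  "Lset t = {x. of_rat (fst t) * fst x + of_rat (fst (snd t)) * snd x + of_rat (snd (snd t)) = 0}"

lemma Lset_closed: "closed (Lset t)"
  unfolding Lset_def by (intro closed_Collect_eq continuous_intros)

lemma Lset_sets[measurable]: "Lset t \<in> sets lborel"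
  using Lset_closed by simp

lemma Lset_null: "t \<noteq> 0 \<Longrightarrow> Lset t \<in> null_sets lborel"
proof -
  assume t: "t \<noteq> 0"
  obtain p q r where tt: "t = (p, q, r)" by (cases t) auto
  show ?thesis
  proof (cases "p = 0 \<and> q = 0")
    case True
    then have "r \<noteq> 0" using t tt by (auto simp: zero_prod_def)
    then have "Lset t = {}" using True by (auto simp: Lset_def tt)
    then show ?thesis by simp
  next
    case False
    define a :: "real \<times> real" where "a = (of_rat p, of_rat q)"
    have a0: "a \<noteq> 0" using False by (auto simp: a_def zero_prod_def)
    have "Lset t = {x. a \<bullet> x = - of_rat r}"
      by (auto simp: Lset_def tt a_def inner_prod_def algebra_simps)
    then have "negligible (Lset t)" using negligible_hyperplane[of a] a0 by simp
    then have "Lset t \<in> null_sets lebesgue" by (simp add: negligible_iff_null_sets)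
    then show ?thesis using null_sets_completion_iff[OF Lset_sets] by simp
  qed
qed

lemma params_eq: "minrot_params = Sq - (\<Union>t\<in>{t. t \<noteq> 0}. Lset t)"
proof (intro set_eqI iffI)
  fix x assume x: "x \<in> minrot_params"
  have ind: "rat_indep3 (fst x) (snd x) 1" and sq: "x \<in> Sq" using x
    by (auto simp: minrot_params_def Sq_def)
  have "x \<notin> Lset t" if "t \<noteq> 0" for t
  proof
    assume "x \<in> Lset t"
    obtain p q r where tt: "t = (p, q, r)" by (cases t) auto
    have "of_rat p * fst x + of_rat q * snd x + of_rat r * 1 = 0"
      using \<open>x \<in> Lset t\<close> by (simp add: Lset_def tt)
    then have "(of_rat p::real) = 0 \<and> (of_rat q::real) = 0 \<and> (of_rat r::real) = 0"
      using ind unfolding rat_indep3_def by (meson Rats_of_rat)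
    then show False using that tt by (simp add: zero_prod_def)
  qed
  then show "x \<in> Sq - (\<Union>t\<in>{t. t \<noteq> 0}. Lset t)" using sq by blast
next
  fix x assume x: "x \<in> Sq - (\<Union>t\<in>{t. t \<noteq> 0}. Lset t)"
  have "rat_indep3 (fst x) (snd x) 1"
    unfolding rat_indep3_def
  proof (intro allI impI)
    fix p q r :: real
    assume h: "p \<in> \<rat> \<and> q \<in> \<rat> \<and> r \<in> \<rat> \<and> p * fst x + q * snd x + r * 1 = 0"
    obtain p' where p': "p = of_rat p'" using h by (auto elim: Rats_cases)
    obtain q' where q': "q = of_rat q'" using h by (auto elim: Rats_cases)
    obtain r' where r': "r = of_rat r'" using h by (auto elim: Rats_cases)
    have "x \<in> Lset (p', q', r')" using h by (simp add: Lset_def p' q' r')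
    then have "(p', q', r') = 0" using x by blast
    then show "p = 0 \<and> q = 0 \<and> r = 0" by (simp add: p' q' r' zero_prod_def)
  qed
  then show "x \<in> minrot_params" using x by (cases x) (auto simp: minrot_params_def Sq_def)
qed

lemma UL_null: "(\<Union>t\<in>{t. t \<noteq> 0}. Lset t) \<in> null_sets lborel"
  by (rule null_sets_UN') (auto intro: Lset_null)

lemma params_sets[measurable]: "minrot_params \<in> sets lborel"
proof -
  have "(\<Union>t\<in>{t. t \<noteq> 0}. Lset t) \<in> sets lborel" using UL_null by auto
  then show ?thesis unfolding params_eq using Sq_sets by auto
qed

lemma params_borel[measurable]: "minrot_params \<in> sets borel"
  using params_sets by simp

lemma Sq_diff_null: "Sq - minrot_params \<in> null_sets lborel"
proof -
  have "Sq - minrot_params = Sq \<inter> (\<Union>t\<in>{t. t \<noteq> 0}. Lset t)" unfolding params_eq by blast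
  then show ?thesis using null_set_Int1[OF UL_null] Sq_sets by simp
qed

lemma params_sub_Sq: "minrot_params \<subseteq> Sq"
  by (auto simp: minrot_params_def Sq_def)

lemma emeasure_Sq: "emeasure lborel Sq = 1"
proof -
  have "emeasure lborel Sq = emeasure (lborel \<Otimes>\<^sub>M lborel) ({0..<1::real} \<times> {0..<1::real})"
    by (simp add: lborel_prod Sq_def)
  also have "\<dots> = emeasure lborel {0..<1::real} * emeasure lborel {0..<1::real}"
    by (rule lborel.emeasure_pair_measure_Times) auto
  finally show ?thesis by simp
qed

lemma emeasure_params: "emeasure lborel minrot_params = 1"
proof -
  have "minrot_params = Sq - (Sq - minrot_params)" using params_sub_Sq by blast
  then have "emeasure lborel minrot_params = emeasure lborel (Sq - (Sq - minrot_params))" by simp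
  also have "\<dots> = emeasure lborel Sq" by (rule emeasure_Diff_null_set[OF Sq_diff_null]) simp
  finally show ?thesis using emeasure_Sq by simp
qed

definition mu :: "(real \<times> real) measure" where
  "mu = restrict_space lborel minrot_params"

lemma space_mu: "space mu = minrot_params"
  by (simp add: mu_def space_restrict_space)

lemma sets_mu: "sets mu = sets minrot_space"
  by (simp add: mu_def minrot_space_def sets_restrict_space)

lemma space_minrot_space: "space minrot_space = minrot_params"
  by (simp add: minrot_space_def space_restrict_space)

lemma prob_mu: "prob_space mu"
proof (rule prob_spaceI)
  have "emeasure mu minrot_params = emeasure lborel minrot_params"
    unfolding mu_def by (rule emeasure_restrict_space) auto
  then have "emeasure mu (space mu) = emeasure lborel minrot_params" by (simp add: space_mu)
  then show "emeasure mu (space mu) = 1" using emeasure_params by simp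
qed

lemma measurable_mu_eq: "measurable mu N = measurable minrot_space N"
  by (rule measurable_cong_sets[OF sets_mu refl])

lemma shear_invariant:
  fixes F :: "real \<times> real \<Rightarrow> real" and T :: "real \<times> real \<Rightarrow> real \<times> real"
  assumes F: "F \<in> borel_measurable mu" and FT: "(\<lambda>x. F (T x)) \<in> borel_measurable mu"
    and Fnn: "\<And>x. x \<in> minrot_params \<Longrightarrow> 0 \<le> F x"
    and TX: "\<And>x. x \<in> minrot_params \<Longrightarrow> T x \<in> minrot_params"
    and Tsh: "(\<forall>x\<in>Sq. T x = (frac (fst x + c * snd x), snd x)) \<or> (\<forall>x\<in>Sq. T x = (fst x, frac (snd x + c * fst x)))"
  shows "integral\<^sup>L mu (\<lambda>x. F (T x)) = integral\<^sup>L mu F"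
proof -
  let ?X = minrot_params
  define Ft where "Ft y = ennreal (F y) * indicator ?X y" for y
  have Ftm[measurable]: "Ft \<in> borel_measurable borel"
  proof -
    have "(\<lambda>x. ennreal (F x)) \<in> borel_measurable (restrict_space lborel ?X)"
      using F unfolding mu_def by measurable
    then have "(\<lambda>x. ennreal (F x) * indicator ?X x) \<in> borel_measurable lborel"
      by (subst (asm) borel_measurable_restrict_space_iff_ennreal) auto
    then show ?thesis unfolding Ft_def by simp
  qed
  have "(\<integral>\<^sup>+ x. ennreal (F (T x)) \<partial>mu) = (\<integral>\<^sup>+ x. indicator ?X x * ennreal (F (T x)) \<partial>lborel)"
    unfolding mu_def by (subst nn_integral_restrict_space) (auto simp: mult.commute)
  also have "\<dots> = (\<integral>\<^sup>+ x. indicator Sq x * Ft (T x) \<partial>lborel)"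
  proof (rule nn_integral_cong_AE)
    show "AE x in lborel. indicator ?X x * ennreal (F (T x)) = indicator Sq x * Ft (T x)"
      using AE_not_in[OF Sq_diff_null]
    proof eventually_elim
      case (elim x)
      then show ?case using TX params_sub_Sq by (auto simp: Ft_def indicator_def)
    qed
  qed
  also have "\<dots> = (\<integral>\<^sup>+ x. indicator Sq x * Ft x \<partial>lborel)"
    using Tsh
  proof
    assume h: "\<forall>x\<in>Sq. T x = (frac (fst x + c * snd x), snd x)"
    have "(\<integral>\<^sup>+ x. indicator Sq x * Ft (T x) \<partial>lborel) = (\<integral>\<^sup>+ x. indicator Sq x * Ft (frac (fst x + c * snd x), snd x) \<partial>lborel)"
      using h by (intro nn_integral_cong) (auto simp: indicator_def)
    also have "\<dots> = (\<integral>\<^sup>+ x. indicator Sq x * Ft x \<partial>lborel)" by (rule shear1_inv[OF Ftm])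
    finally show ?thesis .
  next
    assume h: "\<forall>x\<in>Sq. T x = (fst x, frac (snd x + c * fst x))"
    have "(\<integral>\<^sup>+ x. indicator Sq x * Ft (T x) \<partial>lborel) = (\<integral>\<^sup>+ x. indicator Sq x * Ft (fst x, frac (snd x + c * fst x)) \<partial>lborel)"
      using h by (intro nn_integral_cong) (auto simp: indicator_def)
    also have "\<dots> = (\<integral>\<^sup>+ x. indicator Sq x * Ft x \<partial>lborel)" by (rule shear2_inv[OF Ftm])
    finally show ?thesis .
  qed
  also have "\<dots> = (\<integral>\<^sup>+ x. indicator ?X x * ennreal (F x) \<partial>lborel)"
    using params_sub_Sq by (intro nn_integral_cong) (auto simp: Ft_def indicator_def)
  also have "\<dots> = (\<integral>\<^sup>+ x. ennreal (F x) \<partial>mu)"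
    unfolding mu_def by (subst nn_integral_restrict_space) (auto simp: mult.commute)
  finally have nn: "(\<integral>\<^sup>+ x. ennreal (F (T x)) \<partial>mu) = (\<integral>\<^sup>+ x. ennreal (F x) \<partial>mu)" .
  have "integral\<^sup>L mu (\<lambda>x. F (T x)) = enn2real (\<integral>\<^sup>+ x. ennreal (F (T x)) \<partial>mu)"
    by (rule integral_eq_nn_integral[OF FT]) (auto simp: space_mu TX Fnn intro!: AE_I2)
  also have "\<dots> = enn2real (\<integral>\<^sup>+ x. ennreal (F x) \<partial>mu)" using nn by simp
  also have "\<dots> = integral\<^sup>L mu F"
    by (rule integral_eq_nn_integral[OF F, symmetric]) (auto simp: space_mu Fnn intro!: AE_I2)
  finally show ?thesis .
qed

definition rowv :: "imat \<Rightarrow> int \<times> int" where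
  "rowv M = (case M of (a,b,c,d) \<Rightarrow> (a,b))"

definition rmul :: "int \<times> int \<Rightarrow> imat \<Rightarrow> int \<times> int" where
  "rmul r M = (case r of (r1, r2) \<Rightarrow> case M of (a,b,c,d) \<Rightarrow> (r1*a + r2*c, r1*b + r2*d))"

lemma rowv_mmul: "rowv (mmul N G) = rmul (rowv N) G"
  by (cases N; cases G) (simp add: rowv_def rmul_def mmul_def)

definition Wf :: "(imat \<Rightarrow> real) \<Rightarrow> (int \<times> int) set \<Rightarrow> real" where
  "Wf f S = infsum (\<lambda>M. if rowv M \<in> S then f M else 0) GL"

locale wprob =
  fixes f :: "imat \<Rightarrow> real"
  assumes hs: "(f has_sum 1) GL" and nn: "\<And>M. M \<in> GL \<Longrightarrow> 0 \<le> f M"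
begin

lemma summ: "f summable_on GL" using hs by (auto simp: summable_on_def)

lemma isum: "infsum f GL = 1" using hs by (rule infsumI)

lemma Wsumm: "(\<lambda>M. if rowv M \<in> S then f M else 0) summable_on GL"
  by (rule summable_on_comparison_test[OF summ]) (auto simp: nn)

lemma W_nonneg: "0 \<le> Wf f S"
  unfolding Wf_def by (rule infsum_nonneg) (auto simp: nn)

lemma W_le1: "Wf f S \<le> 1"
proof -
  have "Wf f S \<le> infsum f GL"
    unfolding Wf_def by (rule infsum_mono[OF Wsumm summ]) (auto simp: nn)
  then show ?thesis using isum by simp
qed

lemma W_union: "S \<inter> T = {} \<Longrightarrow> Wf f (S \<union> T) = Wf f S + Wf f T"
proof -
  assume d: "S \<inter> T = {}"
  have "Wf f S + Wf f T = infsum (\<lambda>M. (if rowv M \<in> S then f M else 0) + (if rowv M \<in> T then f M else 0)) GL"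
    unfolding Wf_def by (rule infsum_add[symmetric, OF Wsumm Wsumm])
  also have "\<dots> = Wf f (S \<union> T)"
    unfolding Wf_def by (rule infsum_cong) (use d in auto)
  finally show ?thesis by simp
qed

lemma W_mono: "S \<subseteq> T \<Longrightarrow> Wf f S \<le> Wf f T"
  unfolding Wf_def by (rule infsum_mono[OF Wsumm Wsumm]) (auto simp: nn)

lemma W_all: "(\<And>M. M \<in> GL \<Longrightarrow> rowv M \<in> S) \<Longrightarrow> Wf f S = 1"
proof -
  assume h: "\<And>M. M \<in> GL \<Longrightarrow> rowv M \<in> S"
  have "Wf f S = infsum f GL" unfolding Wf_def by (rule infsum_cong) (simp add: h)
  then show ?thesis using isum by simp
qed

end

lemma W_diff_bound:
  assumes f: "wprob f" and g: "wprob g"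
  shows "\<bar>Wf f S - Wf g S\<bar> \<le> infsum (\<lambda>M. \<bar>f M - g M\<bar>) GL"
    and "(\<lambda>M. \<bar>f M - g M\<bar>) summable_on GL"
proof -
  interpret F: wprob f by (rule f)
  interpret G: wprob g by (rule g)
  have sd: "(\<lambda>M. f M - g M) summable_on GL"
  proof -
    have "(\<lambda>M. f M + - g M) summable_on GL"
      by (intro summable_on_add F.summ summable_on_uminus[THEN iffD2] G.summ)
    then show ?thesis by simp
  qed
  then have asd: "(\<lambda>M. norm (f M - g M)) summable_on GL"
    by (rule summable_on_iff_abs_summable_on_real[THEN iffD1])
  then show "(\<lambda>M. \<bar>f M - g M\<bar>) summable_on GL" by simp
  define h where "h M = (if rowv M \<in> S then f M - g M else 0)" for M
  have hs: "h summable_on GL"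
  proof -
    have "(\<lambda>M. (if rowv M \<in> S then f M else 0) + - (if rowv M \<in> S then g M else 0)) summable_on GL"
      by (intro summable_on_add F.Wsumm summable_on_uminus[THEN iffD2] G.Wsumm)
    moreover have "(\<lambda>M. (if rowv M \<in> S then f M else 0) + - (if rowv M \<in> S then g M else 0)) = h"
      by (auto simp: h_def fun_eq_iff)
    ultimately show ?thesis by simp
  qed
  have "Wf f S - Wf g S = infsum (\<lambda>M. (if rowv M \<in> S then f M else 0) + - (if rowv M \<in> S then g M else 0)) GL"
    unfolding Wf_def
    by (subst infsum_add[OF F.Wsumm summable_on_uminus[THEN iffD2, OF G.Wsumm]])
       (simp add: infsum_uminus)
  also have "\<dots> = infsum h GL" by (rule infsum_cong) (auto simp: h_def)
  finally have eq: "Wf f S - Wf g S = infsum h GL" .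
  have hab: "(\<lambda>M. norm (h M)) summable_on GL" using hs by (rule summable_on_iff_abs_summable_on_real[THEN iffD1])
  have "\<bar>infsum h GL\<bar> \<le> infsum (\<lambda>M. norm (h M)) GL"
    using norm_infsum_bound[OF hab] by simp
  also have "\<dots> \<le> infsum (\<lambda>M. norm (f M - g M)) GL"
    by (rule infsum_mono[OF hab asd]) (auto simp: h_def)
  finally show "\<bar>Wf f S - Wf g S\<bar> \<le> infsum (\<lambda>M. \<bar>f M - g M\<bar>) GL" using eq by simp
qed

lemma fst_borel[measurable]: "fst \<in> borel_measurable (borel :: (real \<times> real) measure)"
  by (intro borel_measurable_continuous_onI continuous_intros)

lemma snd_borel[measurable]: "snd \<in> borel_measurable (borel :: (real \<times> real) measure)"
  by (intro borel_measurable_continuous_onI continuous_intros)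

lemma act_borel: "act M \<in> measurable borel borel"
proof -
  obtain a b c d where M: "M = (a,b,c,d)" by (cases M) auto
  have "(\<lambda>x::real\<times>real. (frac (of_int a * fst x + of_int b * snd x), frac (of_int c * fst x + of_int d * snd x)))
      \<in> measurable borel (borel \<Otimes>\<^sub>M borel)"
    by measurable
  moreover have e: "act M = (\<lambda>x::real\<times>real. (frac (of_int a * fst x + of_int b * snd x), frac (of_int c * fst x + of_int d * snd x)))"
    by (auto simp: act_def M fun_eq_iff)
  ultimately show ?thesis unfolding borel_prod by simp
qed

lemma act_Xs: "M \<in> GL \<Longrightarrow> act M \<in> measurable minrot_space minrot_space"
  unfolding minrot_space_def
  by (intro measurable_restrict_space1 measurable_restrict_space2 act_borel)
     (auto simp: space_restrict_space act_params)

lemma act_mu: "M \<in> GL \<Longrightarrow> act M \<in> measurable mu mu"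
  using act_Xs by (simp add: measurable_cong_sets[OF sets_mu sets_mu])

lemma GL_countable: "countable GL"
  by (rule countable_subset[OF subset_UNIV]) simp

lemma GL_infinite: "infinite GL"
proof -
  have "inj (\<lambda>n::nat. (1::int, int n, 0::int, 1::int))" by (auto intro: injI)
  then have "infinite (range (\<lambda>n::nat. (1::int, int n, 0::int, 1::int)))" by (rule range_inj_infinite)
  moreover have "range (\<lambda>n::nat. (1::int, int n, 0::int, 1::int)) \<subseteq> GL" by (auto simp: GL_def idet_def)
  ultimately show ?thesis using infinite_super by blast
qed

definition enumGL :: "nat \<Rightarrow> imat" where "enumGL = from_nat_into GL"

lemma enumGL_bij: "bij_betw enumGL UNIV GL"
  unfolding enumGL_def by (rule bij_betw_from_nat_into[OF GL_countable GL_infinite])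

lemma infsum_GL_suminf:
  assumes "F summable_on GL"
  shows "infsum F GL = suminf (\<lambda>k. F (enumGL k))"
proof -
  have "(F has_sum infsum F GL) GL" using assms by simp
  then have "((\<lambda>k. F (enumGL k)) has_sum infsum F GL) UNIV"
    using has_sum_reindex_bij_betw[OF enumGL_bij] by blast
  then have "(\<lambda>k. F (enumGL k)) sums infsum F GL" by (rule has_sum_imp_sums)
  then show ?thesis by (simp add: sums_iff)
qed

lemma id_GL: "(1,0,0,1) \<in> GL" by (simp add: GL_def idet_def)

lemma conj_refl: "x \<in> minrot_params \<Longrightarrow> (x, x) \<in> minrot_conj"
  using GL_conj[OF _ id_GL] act_id params_sq by metis

lemma class_same:
  assumes xz: "(x, z) \<in> minrot_conj"
  shows "{y. (z, y) \<in> minrot_conj} = {y. (x, y) \<in> minrot_conj}"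
proof -
  have x: "x \<in> minrot_params" and z: "z \<in> minrot_params" using xz by (auto simp: minrot_conj_iff)
  obtain G where G: "G \<in> GL" "z = act G x" using conj_GL[OF xz] by blast
  have "(\<lambda>N. act N z) ` GL = (\<lambda>N. act N x) ` GL"
  proof
    show "(\<lambda>N. act N z) ` GL \<subseteq> (\<lambda>N. act N x) ` GL"
      using G by (auto simp: act_mmul[symmetric] intro!: imageI GL_mmul)
    show "(\<lambda>N. act N x) ` GL \<subseteq> (\<lambda>N. act N z) ` GL"
    proof
      fix y assume "y \<in> (\<lambda>N. act N x) ` GL"
      then obtain N where N: "N \<in> GL" "y = act N x" by blast
      have "act (mmul N (minv G)) z = act (mmul (mmul N (minv G)) G) x" using G by (simp add: act_mmul)
      also have "mmul (mmul N (minv G)) G = N" using G by (simp add: mmul_assoc minv_left mmul_id_right)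
      finally have "y = act (mmul N (minv G)) z" using N by simp
      then show "y \<in> (\<lambda>N. act N z) ` GL" using N G by (auto intro: GL_mmul GL_minv)
    qed
  qed
  then show ?thesis using class_eq[OF x] class_eq[OF z] by simp
qed

lemma phi_comp_meas:
  assumes m: "ph \<in> borel_measurable (restrict_space (minrot_space \<Otimes>\<^sub>M minrot_space) minrot_conj)"
    and M: "M \<in> GL"
  shows "(\<lambda>x. ph (x, act M x)) \<in> borel_measurable minrot_space"
proof -
  have "(\<lambda>x. (x, act M x)) \<in> measurable minrot_space (minrot_space \<Otimes>\<^sub>M minrot_space)"
    by (intro measurable_Pair measurable_ident_sets refl act_Xs[OF M])
  moreover have pi: "(\<lambda>x. (x, act M x)) \<in> space minrot_space \<rightarrow> minrot_conj"
    by (auto simp: space_minrot_space intro: GL_conj[OF _ M])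
  ultimately have "(\<lambda>x. (x, act M x)) \<in> measurable minrot_space (restrict_space (minrot_space \<Otimes>\<^sub>M minrot_space) minrot_conj)"
    using measurable_restrict_space2 by blast
  from measurable_compose[OF this m] show ?thesis by (simp add: o_def)
qed

locale amen =
  fixes ph :: "nat \<Rightarrow> (real \<times> real) \<times> (real \<times> real) \<Rightarrow> real" and A :: "(real \<times> real) set"
  assumes meas: "\<And>n. ph n \<in> borel_measurable (restrict_space (minrot_space \<Otimes>\<^sub>M minrot_space) minrot_conj)"
    and nn: "\<And>n p. p \<in> minrot_conj \<Longrightarrow> 0 \<le> ph n p"
    and hs: "\<And>n x. x \<in> minrot_params \<Longrightarrow> ((\<lambda>y. ph n (x, y)) has_sum 1) {y. (x, y) \<in> minrot_conj}"
    and A: "A \<in> sets minrot_space"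
    and Ainv: "\<And>x y. (x, y) \<in> minrot_conj \<Longrightarrow> (x \<in> A \<longleftrightarrow> y \<in> A)"
    and Ameas: "emeasure mu A = 1"
    and conv: "\<And>x x'. (x, x') \<in> minrot_conj \<Longrightarrow> x \<in> A \<Longrightarrow> x' \<in> A \<Longrightarrow>
       (\<lambda>n. infsum (\<lambda>y. \<bar>ph n (x, y) - ph n (x', y)\<bar>) {y. (x, y) \<in> minrot_conj}) \<longlonglongrightarrow> 0"
begin

definition w :: "nat \<Rightarrow> (int \<times> int) set \<Rightarrow> real \<times> real \<Rightarrow> real" where
  "w n S x = Wf (\<lambda>M. ph n (x, act M x)) S"

lemma wprob_at:
  assumes x: "x \<in> minrot_params" and xz: "(x, z) \<in> minrot_conj"
  shows "wprob (\<lambda>N. ph n (z, act N x))"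
proof
  have z: "z \<in> minrot_params" using xz by (simp add: minrot_conj_iff)
  have "((\<lambda>y. ph n (z, y)) has_sum 1) ((\<lambda>N. act N x) ` GL)"
    using hs[OF z] class_same[OF xz] class_eq[OF x] by simp
  then have "((\<lambda>y. ph n (z, y)) \<circ> (\<lambda>N. act N x) has_sum 1) GL"
    by (rule has_sum_reindex[OF act_inj_on[OF x], THEN iffD1])
  then show "((\<lambda>N. ph n (z, act N x)) has_sum 1) GL" by (simp add: o_def)
  fix N assume N: "N \<in> GL"
  have "(z, act N x) \<in> minrot_conj"
    using class_same[OF xz] GL_conj[OF x N] by blast
  then show "0 \<le> ph n (z, act N x)" by (rule nn)
qed

lemma wprob_self: "x \<in> minrot_params \<Longrightarrow> wprob (\<lambda>N. ph n (x, act N x))"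
  using wprob_at conj_refl by blast

lemma w_bounds: "x \<in> minrot_params \<Longrightarrow> 0 \<le> w n S x \<and> w n S x \<le> 1"
  unfolding w_def using wprob.W_nonneg[OF wprob_self] wprob.W_le1[OF wprob_self] by blast

lemma w_meas: "w n S \<in> borel_measurable mu"
proof -
  define F where "F k x = (if rowv (enumGL k) \<in> S then ph n (x, act (enumGL k) x) else 0)" for k x
  have Fm: "F k \<in> borel_measurable minrot_space" for k
  proof -
    have "enumGL k \<in> GL" using enumGL_bij by (auto simp: bij_betw_def)
    then show ?thesis unfolding F_def using phi_comp_meas[OF meas] by simp
  qed
  have "(\<lambda>x. suminf (\<lambda>k. F k x)) \<in> borel_measurable minrot_space"
    by (rule borel_measurable_suminf[OF Fm])
  moreover have "w n S x = suminf (\<lambda>k. F k x)" if "x \<in> space minrot_space" for x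
  proof -
    have x: "x \<in> minrot_params" using that by (simp add: space_minrot_space)
    show ?thesis unfolding w_def Wf_def F_def
      by (rule infsum_GL_suminf[OF wprob.Wsumm[OF wprob_self[OF x]]])
  qed
  ultimately have "w n S \<in> borel_measurable minrot_space"
    using measurable_cong by (metis (no_types, lifting))
  then show ?thesis by (simp add: measurable_mu_eq)
qed

end

lemma GL_bij_right:
  assumes G: "G \<in> GL"
  shows "bij_betw (\<lambda>N. mmul N (minv G)) GL GL"
proof (rule bij_betwI[where g="\<lambda>M. mmul M G"])
  show "(\<lambda>N. mmul N (minv G)) \<in> GL \<rightarrow> GL" using G by (auto intro: GL_mmul GL_minv)
  show "(\<lambda>M. mmul M G) \<in> GL \<rightarrow> GL" using G by (auto intro: GL_mmul)
  show "mmul (mmul N (minv G)) G = N" for N using G by (simp add: mmul_assoc minv_left mmul_id_right)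
  show "mmul (mmul M G) (minv G) = M" for M using G by (simp add: mmul_assoc minv_right mmul_id_right)
qed

context amen
begin

lemma A_sub: "A \<subseteq> minrot_params"
  using sets.sets_into_space[OF A] by (simp add: space_minrot_space)

lemma w_shift:
  assumes x: "x \<in> minrot_params" and G: "G \<in> GL"
  shows "w n S (act G x) = Wf (\<lambda>N. ph n (act G x, act N x)) {r. rmul r (minv G) \<in> S}"
proof -
  let ?F = "\<lambda>M. if rowv M \<in> S then ph n (act G x, act M (act G x)) else 0"
  have "w n S (act G x) = infsum ?F GL" by (simp add: w_def Wf_def)
  also have "\<dots> = infsum (\<lambda>N. ?F (mmul N (minv G))) GL"
    by (rule infsum_reindex_bij_betw[OF GL_bij_right[OF G], symmetric])
  also have "\<dots> = infsum (\<lambda>N. if rowv N \<in> {r. rmul r (minv G) \<in> S} then ph n (act G x, act N x) else 0) GL"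
  proof (rule infsum_cong)
    fix N assume "N \<in> GL"
    have "act (mmul N (minv G)) (act G x) = act (mmul (mmul N (minv G)) G) x" by (simp add: act_mmul)
    also have "mmul (mmul N (minv G)) G = N" using G by (simp add: mmul_assoc minv_left mmul_id_right)
    finally show "?F (mmul N (minv G)) = (if rowv N \<in> {r. rmul r (minv G) \<in> S} then ph n (act G x, act N x) else 0)"
      by (simp add: rowv_mmul)
  qed
  finally show ?thesis by (simp add: Wf_def)
qed

lemma w_diff:
  assumes x: "x \<in> minrot_params" and G: "G \<in> GL"
  shows "\<bar>w n S (act G x) - w n {r. rmul r (minv G) \<in> S} x\<bar>
     \<le> infsum (\<lambda>y. \<bar>ph n (x, y) - ph n (act G x, y)\<bar>) {y. (x, y) \<in> minrot_conj}"
proof -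
  let ?S' = "{r. rmul r (minv G) \<in> S}"
  have xy: "(x, act G x) \<in> minrot_conj" by (rule GL_conj[OF x G])
  have "\<bar>w n S (act G x) - w n ?S' x\<bar>
      = \<bar>Wf (\<lambda>N. ph n (act G x, act N x)) ?S' - Wf (\<lambda>N. ph n (x, act N x)) ?S'\<bar>"
    unfolding w_shift[OF x G] by (simp add: w_def)
  also have "\<dots> \<le> infsum (\<lambda>N. \<bar>ph n (act G x, act N x) - ph n (x, act N x)\<bar>) GL"
    by (rule W_diff_bound(1)[OF wprob_at[OF x xy] wprob_self[OF x]])
  also have "\<dots> = infsum (\<lambda>y. \<bar>ph n (x, y) - ph n (act G x, y)\<bar>) ((\<lambda>N. act N x) ` GL)"
    by (subst infsum_reindex[OF act_inj_on[OF x]]) (simp add: o_def abs_minus_commute)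
  also have "\<dots> = infsum (\<lambda>y. \<bar>ph n (x, y) - ph n (act G x, y)\<bar>) {y. (x, y) \<in> minrot_conj}"
    by (simp add: class_eq[OF x])
  finally show ?thesis .
qed

lemma ptw_conv:
  assumes xA: "x \<in> A" and G: "G \<in> GL"
  shows "(\<lambda>n. \<bar>w n S (act G x) - w n {r. rmul r (minv G) \<in> S} x\<bar>) \<longlonglongrightarrow> 0"
proof -
  have x: "x \<in> minrot_params" using xA A_sub by blast
  have xy: "(x, act G x) \<in> minrot_conj" by (rule GL_conj[OF x G])
  have yA: "act G x \<in> A" using Ainv[OF xy] xA by simp
  have D: "(\<lambda>n. infsum (\<lambda>y. \<bar>ph n (x, y) - ph n (act G x, y)\<bar>) {y. (x, y) \<in> minrot_conj}) \<longlonglongrightarrow> 0"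
    by (rule conv[OF xy xA yA])
  show ?thesis
    by (rule Lim_null_comparison[OF _ D]) (auto intro!: always_eventually w_diff[OF x G])
qed

definition nu :: "nat \<Rightarrow> (int \<times> int) set \<Rightarrow> real" where
  "nu n S = integral\<^sup>L mu (w n S)"

lemma w_abs: "x \<in> minrot_params \<Longrightarrow> norm (w n S x) \<le> 1"
  using w_bounds[of x n S] by auto

lemma w_integrable: "integrable mu (w n S)"
proof -
  interpret prob_space mu by (rule prob_mu)
  show ?thesis
  proof (rule integrable_const_bound[where B=1])
    show "AE x in mu. norm (w n S x) \<le> 1"
      by (rule AE_I2) (unfold space_mu, rule w_abs)
    show "w n S \<in> borel_measurable mu" by (rule w_meas)
  qed
qed

lemma nu_nonneg: "0 \<le> nu n S"
  unfolding nu_def by (rule Bochner_Integration.integral_nonneg) (simp add: space_mu w_bounds)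

lemma nu_mono: "S \<subseteq> T \<Longrightarrow> nu n S \<le> nu n T"
  unfolding nu_def
  by (rule integral_mono[OF w_integrable w_integrable])
     (simp add: space_mu w_def wprob.W_mono[OF wprob_self[of _ n]])

lemma nu_union: "S \<inter> T = {} \<Longrightarrow> nu n (S \<union> T) = nu n S + nu n T"
proof -
  assume d: "S \<inter> T = {}"
  have "nu n S + nu n T = integral\<^sup>L mu (\<lambda>x. w n S x + w n T x)"
    unfolding nu_def by (rule Bochner_Integration.integral_add[symmetric, OF w_integrable w_integrable])
  also have "\<dots> = nu n (S \<union> T)"
    unfolding nu_def
    by (rule Bochner_Integration.integral_cong[OF refl])
       (simp add: space_mu w_def wprob.W_union[OF wprob_self[of _ n] d])
  finally show ?thesis by simp
qed

lemma nu_one: "(\<And>M. M \<in> GL \<Longrightarrow> rowv M \<in> T) \<Longrightarrow> nu n T = 1"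
proof -
  assume h: "\<And>M. M \<in> GL \<Longrightarrow> rowv M \<in> T"
  interpret prob_space mu by (rule prob_mu)
  have "nu n T = integral\<^sup>L mu (\<lambda>x. 1::real)"
    unfolding nu_def
    by (rule Bochner_Integration.integral_cong[OF refl])
       (simp add: space_mu w_def wprob.W_all[OF wprob_self[of _ n] h])
  also have "\<dots> = 1" by (simp add: prob_space)
  finally show ?thesis .
qed

lemma nu_conv:
  assumes G: "G \<in> GL"
    and Tsh: "(\<forall>x\<in>Sq. act G x = (frac (fst x + c * snd x), snd x)) \<or> (\<forall>x\<in>Sq. act G x = (fst x, frac (snd x + c * fst x)))"
  shows "\<exists>t. t \<longlonglongrightarrow> 0 \<and> (\<forall>n. nu n {r. rmul r (minv G) \<in> S} - nu n S \<le> t n)"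
proof -
  interpret prob_space mu by (rule prob_mu)
  let ?S' = "{r. rmul r (minv G) \<in> S}"
  define s where "s n x = \<bar>w n S (act G x) - w n ?S' x\<bar>" for n x
  have wG: "(\<lambda>x. w n S (act G x)) \<in> borel_measurable mu" for n
    using measurable_compose[OF act_mu[OF G] w_meas] by (simp add: o_def)
  have sm: "s n \<in> borel_measurable mu" for n
    unfolding s_def using wG w_meas by measurable
  have wGi: "integrable mu (\<lambda>x. w n S (act G x))" for n
  proof (rule integrable_const_bound[where B=1])
    show "AE x in mu. norm (w n S (act G x)) \<le> 1"
      by (rule AE_I2) (unfold space_mu, rule w_abs[OF act_params[OF _ G]])
    show "(\<lambda>x. w n S (act G x)) \<in> borel_measurable mu" by (rule wG)
  qed
  have lim: "(\<lambda>n. integral\<^sup>L mu (s n)) \<longlonglongrightarrow> integral\<^sup>L mu (\<lambda>x. 0)"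
  proof (rule integral_dominated_convergence[where w="\<lambda>x. 2"])
    show "(\<lambda>x. 0::real) \<in> borel_measurable mu" by simp
    show "s n \<in> borel_measurable mu" for n by (rule sm)
    show "integrable mu (\<lambda>x. 2::real)" by simp
    have "AE x in mu. x \<in> A"
      by (rule AE_prob_1) (use Ameas A in \<open>simp add: measure_def sets_mu\<close>)
    then show "AE x in mu. (\<lambda>n. s n x) \<longlonglongrightarrow> 0"
      by eventually_elim (simp add: s_def ptw_conv[OF _ G])
    show "AE x in mu. norm (s n x) \<le> 2" for n
    proof (rule AE_I2)
      fix x assume "x \<in> space mu"
      then have x: "x \<in> minrot_params" by (simp add: space_mu)
      have "0 \<le> w n S (act G x) \<and> w n S (act G x) \<le> 1" using w_bounds[OF act_params[OF x G]] .
      moreover have "0 \<le> w n ?S' x \<and> w n ?S' x \<le> 1" using w_bounds[OF x] .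
      ultimately show "norm (s n x) \<le> 2" by (auto simp: s_def)
    qed
  qed
  have inv: "integral\<^sup>L mu (\<lambda>x. w n S (act G x)) = nu n S" for n
    unfolding nu_def
    by (rule shear_invariant[OF w_meas wG _ _ Tsh])
       (auto dest: w_bounds[of _ n S] intro: act_params[OF _ G])
  have bound: "nu n ?S' - nu n S \<le> integral\<^sup>L mu (s n)" for n
  proof -
    have "nu n ?S' - nu n S = integral\<^sup>L mu (w n ?S') - integral\<^sup>L mu (\<lambda>x. w n S (act G x))"
      using inv[of n] by (simp add: nu_def)
    also have "\<dots> = integral\<^sup>L mu (\<lambda>x. w n ?S' x - w n S (act G x))"
      by (rule Bochner_Integration.integral_diff[symmetric, OF w_integrable wGi])
    also have "\<dots> \<le> \<bar>integral\<^sup>L mu (\<lambda>x. w n ?S' x - w n S (act G x))\<bar>" by simp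
    also have "\<dots> \<le> integral\<^sup>L mu (\<lambda>x. \<bar>w n ?S' x - w n S (act G x)\<bar>)" by (rule integral_abs_bound)
    also have "\<dots> = integral\<^sup>L mu (s n)" unfolding s_def[abs_def] by (simp add: abs_minus_commute)
    finally show ?thesis .
  qed
  show ?thesis using lim bound by (intro exI[of _ "\<lambda>n. integral\<^sup>L mu (s n)"]) simp
qed

end

definition "X1 = {r::int\<times>int. \<bar>fst r\<bar> > \<bar>snd r\<bar>}"
definition "X2 = {r::int\<times>int. \<bar>snd r\<bar> > \<bar>fst r\<bar>}"
definition "X1p = {r::int\<times>int. \<bar>fst r\<bar> > \<bar>snd r\<bar> \<and> (0 \<le> fst r \<and> 0 \<le> snd r \<or> fst r \<le> 0 \<and> snd r \<le> 0)}"
definition "X2p = {r::int\<times>int. \<bar>snd r\<bar> > \<bar>fst r\<bar> \<and> (0 \<le> fst r \<and> 0 \<le> snd r \<or> fst r \<le> 0 \<and> snd r \<le> 0)}"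
definition "Dp = {r::int\<times>int. fst r = snd r \<and> fst r \<noteq> 0}"
definition "Dm = {r::int\<times>int. fst r = - snd r \<and> fst r \<noteq> 0}"

lemma rmul_P: "rmul r (1,0,2,1) = (fst r + 2 * snd r, snd r)"
  by (cases r) (simp add: rmul_def)

lemma rmul_Q: "rmul r (1,2,0,1) = (fst r, 2 * fst r + snd r)"
  by (cases r) (simp add: rmul_def)

lemma incl1: "X2 \<union> X1p \<union> Dp \<subseteq> {r. rmul r (1,0,2,1) \<in> X1p}"
  unfolding rmul_P by (auto simp: X2_def X1p_def Dp_def abs_if)

lemma incl2: "X1 \<union> X2p \<union> Dp \<subseteq> {r. rmul r (1,2,0,1) \<in> X2p}"
  unfolding rmul_Q by (auto simp: X1_def X2p_def Dp_def abs_if)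

lemma incl3: "Dm \<subseteq> {r. rmul r (1,0,2,1) \<in> Dp}"
  unfolding rmul_P by (auto simp: Dm_def Dp_def)

lemma GL_rows: "M \<in> GL \<Longrightarrow> rowv M \<in> X1 \<union> X2 \<union> Dp \<union> Dm"
proof -
  assume "M \<in> GL"
  obtain a b c d where M: "M = (a,b,c,d)" by (cases M) auto
  have "a*d - b*c = 1 \<or> a*d - b*c = -1" using \<open>M \<in> GL\<close> by (simp add: GL_def idet_def M)
  then have "a \<noteq> 0 \<or> b \<noteq> 0" by auto
  then show ?thesis by (auto simp: rowv_def M X1_def X2_def Dp_def Dm_def abs_if)
qed

context amen
begin

lemma amen_False: False
proof -
  define gP :: imat where "gP = (1,0,-2,1)"
  define gQ :: imat where "gQ = (1,-2,0,1)"
  have gP: "gP \<in> GL" and gQ: "gQ \<in> GL" by (simp_all add: gP_def gQ_def GL_def idet_def)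
  have iP: "minv gP = (1,0,2,1)" and iQ: "minv gQ = (1,2,0,1)"
    by (simp_all add: gP_def gQ_def minv_def idet_def)
  have shP: "\<forall>x\<in>Sq. act gP x = (fst x, frac (snd x + (-2) * fst x))"
    by (auto simp: Sq_def gP_def act_def frac_eq)
  have shQ: "\<forall>x\<in>Sq. act gQ x = (frac (fst x + (-2) * snd x), snd x)"
    by (auto simp: Sq_def gQ_def act_def frac_eq)
  obtain t1 where t1: "t1 \<longlonglongrightarrow> 0" "\<And>n. nu n {r. rmul r (1,0,2,1) \<in> X1p} - nu n X1p \<le> t1 n"
    using nu_conv[OF gP, of "-2" X1p] shP iP by auto
  obtain t2 where t2: "t2 \<longlonglongrightarrow> 0" "\<And>n. nu n {r. rmul r (1,2,0,1) \<in> X2p} - nu n X2p \<le> t2 n"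
    using nu_conv[OF gQ, of "-2" X2p] shQ iQ by auto
  obtain t3 where t3: "t3 \<longlonglongrightarrow> 0" "\<And>n. nu n {r. rmul r (1,0,2,1) \<in> Dp} - nu n Dp \<le> t3 n"
    using nu_conv[OF gP, of "-2" Dp] shP iP by auto
  have ineq: "1 \<le> 2 * t1 n + t2 n + t3 n" for n
  proof -
    have d1: "X2 \<inter> X1p = {}" "(X2 \<union> X1p) \<inter> Dp = {}"
      by (auto simp: X2_def X1p_def Dp_def)
    have u1: "nu n (X2 \<union> X1p \<union> Dp) = nu n X2 + nu n X1p + nu n Dp"
      using nu_union[OF d1(2), of n] nu_union[OF d1(1), of n] by simp
    have d2: "X1 \<inter> X2p = {}" "(X1 \<union> X2p) \<inter> Dp = {}"
      by (auto simp: X1_def X2p_def Dp_def)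
    have u2: "nu n (X1 \<union> X2p \<union> Dp) = nu n X1 + nu n X2p + nu n Dp"
      using nu_union[OF d2(2), of n] nu_union[OF d2(1), of n] by simp
    have d3: "X1 \<inter> X2 = {}" "(X1 \<union> X2) \<inter> Dp = {}" "(X1 \<union> X2 \<union> Dp) \<inter> Dm = {}"
      by (auto simp: X1_def X2_def Dp_def Dm_def)
    have u3: "nu n (X1 \<union> X2 \<union> Dp \<union> Dm) = nu n X1 + nu n X2 + nu n Dp + nu n Dm"
      using nu_union[OF d3(3), of n] nu_union[OF d3(2), of n] nu_union[OF d3(1), of n] by simp
    have tot: "nu n (X1 \<union> X2 \<union> Dp \<union> Dm) = 1" by (rule nu_one[OF GL_rows])
    have m1: "nu n (X2 \<union> X1p \<union> Dp) \<le> nu n {r. rmul r (1,0,2,1) \<in> X1p}" by (rule nu_mono[OF incl1])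
    have m2: "nu n (X1 \<union> X2p \<union> Dp) \<le> nu n {r. rmul r (1,2,0,1) \<in> X2p}" by (rule nu_mono[OF incl2])
    have m3: "nu n Dm \<le> nu n {r. rmul r (1,0,2,1) \<in> Dp}" by (rule nu_mono[OF incl3])
    have "0 \<le> nu n X2" "0 \<le> nu n X1" "0 \<le> nu n Dp" "0 \<le> nu n X2p" "0 \<le> nu n X1p" by (rule nu_nonneg)+
    then show ?thesis using u1 u2 u3 tot m1 m2 m3 t1(2)[of n] t2(2)[of n] t3(2)[of n] by linarith
  qed
  have "(\<lambda>n. 2 * t1 n + t2 n + t3 n) \<longlonglongrightarrow> 2 * 0 + 0 + 0"
    by (intro tendsto_intros t1 t2 t3)
  then have "eventually (\<lambda>n. 2 * t1 n + t2 n + t3 n < 1) sequentially"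
    by (rule order_tendstoD(2)) simp
  then obtain N where "\<And>n. n \<ge> N \<Longrightarrow> 2 * t1 n + t2 n + t3 n < 1" by (auto simp: eventually_sequentially)
  then show False using ineq[of N] by fastforce
qed

end

theorem theorem1p2:
  shows "\<not> amenable_rel minrot_space minrot_conj"
proof
  assume am: "amenable_rel minrot_space minrot_conj"
  have "mu_amenable minrot_space minrot_conj mu"
    using am sets_mu prob_mu by (simp add: amenable_rel_def)
  then obtain ph :: "nat \<Rightarrow> (real \<times> real) \<times> (real \<times> real) \<Rightarrow> real" and A where
    meas: "\<forall>n. ph n \<in> borel_measurable (restrict_space (minrot_space \<Otimes>\<^sub>M minrot_space) minrot_conj)"
    and nn: "\<forall>n p. p \<in> minrot_conj \<longrightarrow> 0 \<le> ph n p"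
    and hs: "\<forall>n. \<forall>x\<in>space minrot_space. ((\<lambda>y. ph n (x, y)) has_sum 1) {y. (x, y) \<in> minrot_conj}"
    and A: "A \<in> sets minrot_space"
    and Ainv: "\<forall>x y. (x, y) \<in> minrot_conj \<longrightarrow> (x \<in> A \<longleftrightarrow> y \<in> A)"
    and Ameas: "emeasure mu A = 1"
    and conv: "\<forall>x x'. (x, x') \<in> minrot_conj \<and> x \<in> A \<and> x' \<in> A \<longrightarrow>
              (\<lambda>n. infsum (\<lambda>y. \<bar>ph n (x, y) - ph n (x', y)\<bar>) {y. (x, y) \<in> minrot_conj}) \<longlonglongrightarrow> 0"
    unfolding mu_amenable_def by blast
  interpret amen ph A
    by unfold_locales (use meas nn hs A Ainv Ameas conv in \<open>auto simp: space_minrot_space\<close>)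
  show False by (rule amen_False)
qed

end
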